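(* Let $\mathsf{X}\subset\mathbb{R}^p$, $\mathsf{Y}\subset\mathbb{R}^q$, let $\tilde s(x\mid\gamma)$ and $\tilde h(\gamma\mid x)$ be conditional pdfs on $\mathsf{X}$ and $\mathsf{Y}$ respectively, and consider the Markov chains with transition densities $k(x,x')=\int_{\mathsf{Y}}\tilde s(x'\mid\gamma)\tilde h(\gamma\mid x)d\gamma$ on $\mathsf{X}$ (transition function $K$, invariant probability $\Pi$) and $\tilde k(\gamma,\gamma')=\int_{\mathsf{X}}\tilde h(\gamma'\mid x)\tilde s(x\mid\gamma)dx$ on $\mathsf{Y}$, both Harris ergodic. Suppose the chain $\tilde k$ satisfies $\int_{\mathsf{Y}}\tilde V(\gamma')\tilde k(\gamma,\gamma')d\gamma'\le\lambda\tilde V(\gamma)+\tilde L$ for all $\gamma$, with $\tilde V:\mathsf{Y}\to[0,\infty)$, $\lambda<1$, $\tilde L<\infty$, and $\tilde k(\gamma,\cdot)\ge\tilde\varepsilon\,\tilde Q(\cdot)$ whenever $\tilde V(\gamma)<d$, for some $\tilde\varepsilon>0$, probability measure $\tilde Q$ and $d>2\tilde L/(1-\lambda)$. Let $\hat\rho_f=(1-\tilde\varepsilon)^r\vee\Big(\frac{1+2\tilde L+\lambda d}{1+d}\Big)^{1-r}\{1+2(\lambda d+\tilde L)\}^r$ for some $r\in(0,1)$. Then for every $x\in\mathsf{X}$ and $m\ge1$, $\|K^m(x,\cdot)-\Pi(\cdot)\|_{TV}\le\Big(2+\frac{\tilde L}{1-\lambda}+\int_{\mathsf{Y}}\tilde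 V(\gamma)\tilde h(\gamma\mid x)d\gamma\Big)\hat\rho_f^{\,m-1}$.
   Context: $K^m$ denotes the $m$-step transition function and $\|\cdot\|_{TV}$ the total variation norm. *)

theory Defs
  imports "HOL-Probability.Probability"
begin

definition markov_kernel :: "'a measure \<Rightarrow> ('a \<Rightarrow> 'a measure) \<Rightarrow> bool" where
  "markov_kernel M P \<longleftrightarrow> P \<in> measurable M (prob_algebra M)"

fun kpow :: "('a \<Rightarrow> 'a measure) \<Rightarrow> nat \<Rightarrow> 'a \<Rightarrow> 'a set \<Rightarrow> real" where
  "kpow P 0 x A = indicator A x"
| "kpow P (Suc n) x A = (\<integral>y. kpow P n y A \<partial>(P x))"

definition tv_dist :: "'a measure \<Rightarrow> ('a set \<Rightarrow> real) \<Rightarrow> ('a set \<Rightarrow> real) \<Rightarrow> real" where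
  "tv_dist M \<mu> \<nu> = (SUP A\<in>sets M. \<bar>\<mu> A - \<nu> A\<bar>)"

definition invariant_prob :: "'a measure \<Rightarrow> ('a \<Rightarrow> 'a measure) \<Rightarrow> 'a measure \<Rightarrow> bool" where
  "invariant_prob M P \<pi> \<longleftrightarrow> prob_space \<pi> \<and> sets \<pi> = sets M \<and>
     (\<forall>A\<in>sets M. emeasure \<pi> A = (\<integral>\<^sup>+x. emeasure (P x) A \<partial>\<pi>))"

text \<open>hit P A n x = probability, starting at x, that the chain enters A at some time
  1 <= t <= n (i.e. P_x(tau_A <= n) with tau_A the first return time).\<close>
fun hit :: "('a \<Rightarrow> 'a measure) \<Rightarrow> 'a set \<Rightarrow> nat \<Rightarrow> 'a \<Rightarrow> real" where
  "hit P A 0 x = 0"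
| "hit P A (Suc n) x = (\<integral>y. indicator A y + indicator (- A) y * hit P A n y \<partial>(P x))"

definition harris_recurrent :: "'a measure \<Rightarrow> ('a \<Rightarrow> 'a measure) \<Rightarrow> bool" where
  "harris_recurrent M P \<longleftrightarrow> (\<exists>\<phi>. sigma_finite_measure \<phi> \<and> sets \<phi> = sets M \<and>
      emeasure \<phi> (space M) > 0 \<and>
      (\<forall>A\<in>sets M. emeasure \<phi> A > 0 \<longrightarrow> (\<forall>x\<in>space M. (\<lambda>n. hit P A n x) \<longlonglongrightarrow> 1)))"

definition aperiodic :: "'a measure \<Rightarrow> ('a \<Rightarrow> 'a measure) \<Rightarrow> 'a measure \<Rightarrow> bool" where
  "aperiodic M P \<pi> \<longleftrightarrow> \<not> (\<exists>d::nat. \<exists>C::nat \<Rightarrow> 'a set. d \<ge> 2 \<and>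
      (\<forall>i<d. C i \<in> sets M \<and> emeasure \<pi> (C i) > 0) \<and>
      (\<forall>i<d. \<forall>j<d. i \<noteq> j \<longrightarrow> C i \<inter> C j = {}) \<and>
      (\<forall>i<d. \<forall>x\<in>C i. emeasure (P x) (C (Suc i mod d)) = 1))"

definition harris_ergodic :: "'a measure \<Rightarrow> ('a \<Rightarrow> 'a measure) \<Rightarrow> bool" where
  "harris_ergodic M P \<longleftrightarrow> markov_kernel M P \<and> harris_recurrent M P \<and>
     (\<exists>\<pi>. invariant_prob M P \<pi> \<and> aperiodic M P \<pi>)"

text \<open>s x g = s~(x | g) (pdf on X), h g x = h~(g | x) (pdf on Y).
  SX, SY are Lebesgue measure restricted to X, Y.\<close>

definition xdens :: "'b measure \<Rightarrow> ('a \<Rightarrow> 'b \<Rightarrow> real) \<Rightarrow> ('b \<Rightarrow> 'a \<Rightarrow> real) \<Rightarrow> 'a \<Rightarrow> 'a \<Rightarrow> ennreal" where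
  "xdens SY s h x x' = (\<integral>\<^sup>+g. ennreal (s x' g * h g x) \<partial>SY)"

definition ydens :: "'a measure \<Rightarrow> ('a \<Rightarrow> 'b \<Rightarrow> real) \<Rightarrow> ('b \<Rightarrow> 'a \<Rightarrow> real) \<Rightarrow> 'b \<Rightarrow> 'b \<Rightarrow> ennreal" where
  "ydens SX s h g g' = (\<integral>\<^sup>+x. ennreal (h g' x * s x g) \<partial>SX)"

definition xkern :: "'a measure \<Rightarrow> 'b measure \<Rightarrow> ('a \<Rightarrow> 'b \<Rightarrow> real) \<Rightarrow> ('b \<Rightarrow> 'a \<Rightarrow> real) \<Rightarrow> 'a \<Rightarrow> 'a measure" where
  "xkern SX SY s h x = density SX (xdens SY s h x)"

definition ykern :: "'a measure \<Rightarrow> 'b measure \<Rightarrow> ('a \<Rightarrow> 'b \<Rightarrow> real) \<Rightarrow> ('b \<Rightarrow> 'a \<Rightarrow> real) \<Rightarrow> 'b \<Rightarrow> 'b measure" where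
  "ykern SX SY s h g = density SY (ydens SX s h g)"

end

theory Submission
  imports Defs
begin


lemma rate2:
  fixes al A r :: real and k :: nat
  assumes al: "0 < al" "al \<le> 1" and A: "1 \<le> A" and r: "0 < r" "r < 1"
  defines "j \<equiv> nat \<lceil>r * k\<rceil>"
  shows "(A / al) ^ (j - 1) * al ^ k \<le> (al powr (1 - r) * A powr r) ^ k"
proof (cases "k = 0")
  case True then show ?thesis by (simp add: j_def)
next
  case False
  then have k1: "1 \<le> k" by simp
  have rk: "0 < r * k" using r False by simp
  have j1: "1 \<le> j" unfolding j_def using rk by linarith
  have jl: "real j - 1 < r * k"
  proof -
    have "0 \<le> \<lceil>r * k\<rceil>" using rk by simp
    then have "real j = of_int \<lceil>r * k\<rceil>" unfolding j_def by simp
    then show ?thesis using ceiling_correct[of "r * k"] by linarith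
  qed
  have "r * real k \<le> 1 * real k" using r by (intro mult_right_mono) simp_all
  then have jk: "j \<le> k" unfolding j_def by (simp add: ceiling_le_iff nat_le_iff)
  have A0: "0 < A" using A by simp
  have "(A / al) ^ (j - 1) * al ^ k = A ^ (j - 1) * al ^ (k - (j - 1))"
  proof -
    have "al ^ k = al ^ (j - 1) * al ^ (k - (j - 1))" using jk j1 by (simp add: power_add[symmetric])
    then show ?thesis using al by (simp add: power_divide field_simps)
  qed
  also have "\<dots> \<le> A powr (r * k) * al powr ((1 - r) * k)"
  proof (rule mult_mono)
    have "A ^ (j - 1) = A powr real (j - 1)" using A0 by (simp add: powr_realpow)
    also have "\<dots> \<le> A powr (r * k)" using jl j1 A by (intro powr_mono) (simp_all add: of_nat_diff)
    finally show "A ^ (j - 1) \<le> A powr (r * k)" .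
    have "al ^ (k - (j - 1)) = al powr real (k - (j - 1))" using al by (simp add: powr_realpow)
    also have "\<dots> \<le> al powr ((1 - r) * k)"
      using jl j1 jk al by (intro powr_mono') (simp_all add: of_nat_diff algebra_simps)
    finally show "al ^ (k - (j - 1)) \<le> al powr ((1 - r) * k)" .
  qed (use al in simp_all)
  also have "A powr (r * k) * al powr ((1 - r) * k) = (al powr (1 - r) * A powr r) ^ k"
    using al A0 by (simp add: power_mult_distrib powr_power mult.commute)
  finally show ?thesis .
qed

lemma rate1:
  fixes e r s :: real and k :: nat
  assumes e: "0 < e" and r: "0 < r" "r < 1" and s: "0 \<le> s"
  defines "j \<equiv> nat \<lceil>r * k\<rceil>"
  shows "(1 - min e 1) ^ j \<le> (max ((1 - e) powr r) s) ^ k"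
proof (cases "k = 0")
  case True then show ?thesis by (simp add: j_def)
next
  case False
  have rk: "0 < r * k" using r False by simp
  have j1: "1 \<le> j" unfolding j_def using rk by linarith
  have jr: "r * k \<le> real j" unfolding j_def by linarith
  have m0: "0 \<le> max ((1 - e) powr r) s" using s by simp
  show ?thesis
  proof (cases "1 \<le> e")
    case True
    have "(1 - min e 1) ^ j = 0" using True j1 by (simp add: power_0_left)
    then show ?thesis using zero_le_power[OF m0, of k] by linarith
  next
    case False
    let ?q = "1 - e"
    have q: "0 < ?q" "?q \<le> 1" using False e by auto
    have "(1 - min e 1) ^ j = ?q powr real j" using q False by (simp add: powr_realpow)
    also have "\<dots> \<le> ?q powr (r * k)" using jr q by (intro powr_mono') simp_all
    also have "\<dots> = (?q powr r) ^ k" using q by (simp add: powr_power mult.commute)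
    also have "\<dots> \<le> (max ((1 - e) powr r) s) ^ k" by (intro power_mono) simp_all
    finally show ?thesis .
  qed
qed



lemma ennreal_add_divide_distrib: "((a::ennreal) + b) / c = a / c + b / c"
  by (simp add: divide_ennreal_def distrib_right)

locale yc = sigma_finite_measure SY for SY :: "'b measure" +
  fixes p :: "'b \<Rightarrow> 'b \<Rightarrow> ennreal" and V :: "'b \<Rightarrow> real" and lam L eps d :: real
    and Q :: "'b measure" and u0 nu :: "'b \<Rightarrow> ennreal"
  assumes p_meas[measurable]: "case_prod p \<in> borel_measurable (SY \<Otimes>\<^sub>M SY)"
  and p_one: "\<And>g. g \<in> space SY \<Longrightarrow> (\<integral>\<^sup>+g'. p g g' \<partial>SY) = 1"
  and V_meas[measurable]: "V \<in> borel_measurable SY"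
  and V_nn: "\<And>g. g \<in> space SY \<Longrightarrow> 0 \<le> V g"
  and lam: "0 \<le> lam" "lam < 1" and L: "0 \<le> L"
  and drift: "\<And>g. g \<in> space SY \<Longrightarrow> (\<integral>\<^sup>+g'. ennreal (V g') * p g g' \<partial>SY) \<le> ennreal (lam * V g + L)"
  and eps: "0 < eps"
  and Q: "prob_space Q" "sets Q = sets SY"
  and minor: "\<And>g A. g \<in> space SY \<Longrightarrow> V g < d \<Longrightarrow> A \<in> sets SY \<Longrightarrow>
      ennreal eps * emeasure Q A \<le> (\<integral>\<^sup>+g'. p g g' * indicator A g' \<partial>SY)"
  and d: "2 * L / (1 - lam) < d"
  and u0_meas[measurable]: "u0 \<in> borel_measurable SY" and u0_one: "(\<integral>\<^sup>+g. u0 g \<partial>SY) = 1"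
  and nu_meas[measurable]: "nu \<in> borel_measurable SY" and nu_one: "(\<integral>\<^sup>+g. nu g \<partial>SY) = 1"
  and nu_stat: "\<And>F. F \<in> borel_measurable SY \<Longrightarrow>
      (\<integral>\<^sup>+g. nu g * (\<integral>\<^sup>+g'. F g' * p g g' \<partial>SY) \<partial>SY) = (\<integral>\<^sup>+g. nu g * F g \<partial>SY)"
begin

interpretation pair_sigma_finite SY SY ..

definition P :: "('b \<Rightarrow> ennreal) \<Rightarrow> 'b \<Rightarrow> ennreal" where
  "P F g = (\<integral>\<^sup>+g'. F g' * p g g' \<partial>SY)"

definition mn :: "'b \<times> 'b \<Rightarrow> 'b \<Rightarrow> ennreal" where
  "mn z g' = min (p (fst z) g') (p (snd z) g')"
definition dl :: "'b \<times> 'b \<Rightarrow> ennreal" where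
  "dl z = (\<integral>\<^sup>+g'. mn z g' \<partial>SY)"
definition r1 :: "'b \<times> 'b \<Rightarrow> 'b \<Rightarrow> ennreal" where
  "r1 z g' = p (fst z) g' - mn z g'"
definition r2 :: "'b \<times> 'b \<Rightarrow> 'b \<Rightarrow> ennreal" where
  "r2 z g' = p (snd z) g' - mn z g'"
definition J :: "('b \<Rightarrow> ennreal) \<Rightarrow> ('b \<Rightarrow> ennreal) \<Rightarrow> ('b \<times> 'b \<Rightarrow> ennreal) \<Rightarrow> ennreal" where
  "J f1 f2 Phi = (\<integral>\<^sup>+a. \<integral>\<^sup>+b. Phi (a,b) * f1 a * f2 b \<partial>SY \<partial>SY)"

definition T :: "(nat \<Rightarrow> 'b \<times> 'b \<Rightarrow> ennreal) \<Rightarrow> nat \<Rightarrow> 'b \<times> 'b \<Rightarrow> ennreal" where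
  "T Phi n z = (if V (fst z) < d \<and> V (snd z) < d
      then J (r1 z) (r2 z) (Phi (Suc n)) / (1 - dl z)
      else J (p (fst z)) (p (snd z)) (Phi n))"

definition good :: "(nat \<Rightarrow> 'b \<times> 'b \<Rightarrow> ennreal) \<Rightarrow> bool" where
  "good Phi \<longleftrightarrow> (\<forall>n. Phi n \<in> borel_measurable (SY \<Otimes>\<^sub>M SY))"

definition leq :: "(nat \<Rightarrow> 'b \<times> 'b \<Rightarrow> ennreal) \<Rightarrow> (nat \<Rightarrow> 'b \<times> 'b \<Rightarrow> ennreal) \<Rightarrow> bool" where
  "leq Phi Psi \<longleftrightarrow> (\<forall>n. \<forall>a\<in>space SY. \<forall>b\<in>space SY. Phi n (a,b) \<le> Psi n (a,b))"

definition F0 :: "(nat \<Rightarrow> 'b \<times> 'b \<Rightarrow> ennreal) \<Rightarrow> ennreal" where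
  "F0 Phi = J u0 nu (Phi 0)"

definition Fk :: "nat \<Rightarrow> (nat \<Rightarrow> 'b \<times> 'b \<Rightarrow> ennreal) \<Rightarrow> ennreal" where
  "Fk k Phi = F0 ((T ^^ k) Phi)"

lemma P_meas[measurable]: assumes [measurable]: "F \<in> borel_measurable SY" shows "P F \<in> borel_measurable SY"
  unfolding P_def by measurable

lemma J_add:
  assumes [measurable]: "f1 \<in> borel_measurable SY" "f2 \<in> borel_measurable SY"
    "Phi \<in> borel_measurable (SY \<Otimes>\<^sub>M SY)" "Psi \<in> borel_measurable (SY \<Otimes>\<^sub>M SY)"
  shows "J f1 f2 (\<lambda>w. Phi w + Psi w) = J f1 f2 Phi + J f1 f2 Psi"
proof -
  have "J f1 f2 (\<lambda>w. Phi w + Psi w) = (\<integral>\<^sup>+a. (\<integral>\<^sup>+b. Phi (a,b) * f1 a * f2 b \<partial>SY) + (\<integral>\<^sup>+b. Psi (a,b) * f1 a * f2 b \<partial>SY) \<partial>SY)"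
    unfolding J_def
    by (intro nn_integral_cong) (simp add: distrib_right nn_integral_add)
  also have "\<dots> = J f1 f2 Phi + J f1 f2 Psi"
    unfolding J_def by (rule nn_integral_add) measurable
  finally show ?thesis .
qed

lemma J_cmult:
  assumes [measurable]: "f1 \<in> borel_measurable SY" "f2 \<in> borel_measurable SY"
    "Phi \<in> borel_measurable (SY \<Otimes>\<^sub>M SY)"
  shows "J f1 f2 (\<lambda>w. c * Phi w) = c * J f1 f2 Phi"
proof -
  have "J f1 f2 (\<lambda>w. c * Phi w) = (\<integral>\<^sup>+a. c * (\<integral>\<^sup>+b. Phi (a,b) * f1 a * f2 b \<partial>SY) \<partial>SY)"
    unfolding J_def
    by (intro nn_integral_cong) (simp add: mult.assoc nn_integral_cmult[symmetric])
  also have "\<dots> = c * J f1 f2 Phi"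
    unfolding J_def by (rule nn_integral_cmult) measurable
  finally show ?thesis .
qed

lemma J_mono:
  assumes "\<And>a b. a \<in> space SY \<Longrightarrow> b \<in> space SY \<Longrightarrow> Phi (a,b) \<le> Psi (a,b)"
  shows "J f1 f2 Phi \<le> J f1 f2 Psi"
  unfolding J_def using assms
  by (intro nn_integral_mono mult_right_mono) auto

lemma J_fst:
  assumes [measurable]: "f1 \<in> borel_measurable SY" "f2 \<in> borel_measurable SY" "F \<in> borel_measurable SY"
  shows "J f1 f2 (\<lambda>w. F (fst w)) = (\<integral>\<^sup>+a. F a * f1 a \<partial>SY) * (\<integral>\<^sup>+b. f2 b \<partial>SY)"
proof -
  have "J f1 f2 (\<lambda>w. F (fst w)) = (\<integral>\<^sup>+a. (F a * f1 a) * (\<integral>\<^sup>+b. f2 b \<partial>SY) \<partial>SY)"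
    unfolding J_def
    by (intro nn_integral_cong) (simp add: nn_integral_cmult[symmetric])
  also have "\<dots> = (\<integral>\<^sup>+a. F a * f1 a \<partial>SY) * (\<integral>\<^sup>+b. f2 b \<partial>SY)"
    by (rule nn_integral_multc) measurable
  finally show ?thesis .
qed

lemma J_snd:
  assumes [measurable]: "f1 \<in> borel_measurable SY" "f2 \<in> borel_measurable SY" "F \<in> borel_measurable SY"
  shows "J f1 f2 (\<lambda>w. F (snd w)) = (\<integral>\<^sup>+a. f1 a \<partial>SY) * (\<integral>\<^sup>+b. F b * f2 b \<partial>SY)"
proof -
  have "J f1 f2 (\<lambda>w. F (snd w)) = (\<integral>\<^sup>+a. f1 a * (\<integral>\<^sup>+b. F b * f2 b \<partial>SY) \<partial>SY)"
    unfolding J_def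
    by (intro nn_integral_cong) (simp add: nn_integral_cmult[symmetric] ac_simps)
  also have "\<dots> = (\<integral>\<^sup>+a. f1 a \<partial>SY) * (\<integral>\<^sup>+b. F b * f2 b \<partial>SY)"
    by (rule nn_integral_multc) measurable
  finally show ?thesis .
qed

lemma J_const:
  assumes [measurable]: "f1 \<in> borel_measurable SY" "f2 \<in> borel_measurable SY"
  shows "J f1 f2 (\<lambda>w. c) = c * (\<integral>\<^sup>+a. f1 a \<partial>SY) * (\<integral>\<^sup>+b. f2 b \<partial>SY)"
  using J_fst[of f1 f2 "\<lambda>_. c"] by (simp add: nn_integral_cmult)

lemma good_T: assumes "good Phi" shows "good (T Phi)"
  unfolding good_def
proof
  fix n
  have [measurable]: "Phi n \<in> borel_measurable (SY \<Otimes>\<^sub>M SY)" "Phi (Suc n) \<in> borel_measurable (SY \<Otimes>\<^sub>M SY)"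
    using assms by (auto simp: good_def)
  show "T Phi n \<in> borel_measurable (SY \<Otimes>\<^sub>M SY)"
    unfolding T_def[abs_def] J_def r1_def r2_def dl_def mn_def by measurable
qed

lemma p_meas2[measurable]: "g \<in> space SY \<Longrightarrow> p g \<in> borel_measurable SY"
  using measurable_compose_Pair1[OF _ p_meas] by simp

lemma r_meas[measurable]:
  assumes "z \<in> space (SY \<Otimes>\<^sub>M SY)"
  shows "r1 z \<in> borel_measurable SY" "r2 z \<in> borel_measurable SY" "mn z \<in> borel_measurable SY"
  using assms unfolding r1_def[abs_def] r2_def[abs_def] mn_def[abs_def]
  by (auto simp: space_pair_measure)

lemma good_funpow: "good Phi \<Longrightarrow> good ((T ^^ k) Phi)"
  by (induction k) (auto intro: good_T)

lemma T_add:
  assumes "good Phi" "good Psi" "z \<in> space (SY \<Otimes>\<^sub>M SY)"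
  shows "T (\<lambda>n w. Phi n w + Psi n w) n z = T Phi n z + T Psi n z"
proof -
  have [measurable]: "Phi m \<in> borel_measurable (SY \<Otimes>\<^sub>M SY)" "Psi m \<in> borel_measurable (SY \<Otimes>\<^sub>M SY)" for m
    using assms by (auto simp: good_def)
  have [measurable]: "p (fst z) \<in> borel_measurable SY" "p (snd z) \<in> borel_measurable SY"
    using assms by (auto simp: space_pair_measure)
  show ?thesis
    unfolding T_def using assms
    by (simp add: J_add ennreal_add_divide_distrib)
qed

lemma T_cmult:
  assumes "good Phi" "z \<in> space (SY \<Otimes>\<^sub>M SY)"
  shows "T (\<lambda>n w. c * Phi n w) n z = c * T Phi n z"
proof -
  have [measurable]: "Phi m \<in> borel_measurable (SY \<Otimes>\<^sub>M SY)" for m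
    using assms by (auto simp: good_def)
  have [measurable]: "p (fst z) \<in> borel_measurable SY" "p (snd z) \<in> borel_measurable SY"
    using assms by (auto simp: space_pair_measure)
  show ?thesis
    unfolding T_def using assms
    by (simp add: J_cmult divide_ennreal_def mult.assoc)
qed

lemma T_mono:
  assumes "leq Phi Psi" shows "leq (T Phi) (T Psi)"
  unfolding leq_def
proof (intro allI ballI)
  fix n a b assume ab: "a \<in> space SY" "b \<in> space SY"
  have "J f1 f2 (Phi m) \<le> J f1 f2 (Psi m)" for f1 f2 m
    using assms by (intro J_mono) (auto simp: leq_def)
  then show "T Phi n (a, b) \<le> T Psi n (a, b)"
    unfolding T_def divide_ennreal_def by (auto intro: mult_right_mono)
qed

lemma Fk_Suc: "Fk (Suc k) Phi = Fk k (T Phi)"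
  unfolding Fk_def by (simp only: funpow_Suc_right comp_apply)

lemma Fk_0: "Fk 0 Phi = F0 Phi"
  unfolding Fk_def by simp

lemma Fk_mono: "leq Phi Psi \<Longrightarrow> Fk k Phi \<le> Fk k Psi"
proof (induction k arbitrary: Phi Psi)
  case 0
  then show ?case unfolding Fk_0 F0_def by (intro J_mono) (auto simp: leq_def)
next
  case (Suc k)
  then show ?case unfolding Fk_Suc by (intro Suc.IH T_mono)
qed

lemma Fk_cong: "leq Phi Psi \<Longrightarrow> leq Psi Phi \<Longrightarrow> Fk k Phi = Fk k Psi"
  by (intro antisym Fk_mono)

lemma leq_refl_eq: "(\<And>n a b. a \<in> space SY \<Longrightarrow> b \<in> space SY \<Longrightarrow> Phi n (a,b) = Psi n (a,b)) \<Longrightarrow> leq Phi Psi"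
  unfolding leq_def by auto

lemma Fk_cong':
  "(\<And>n a b. a \<in> space SY \<Longrightarrow> b \<in> space SY \<Longrightarrow> Phi n (a,b) = Psi n (a,b)) \<Longrightarrow> Fk k Phi = Fk k Psi"
  by (intro Fk_cong leq_refl_eq) auto

lemma good_add: "good Phi \<Longrightarrow> good Psi \<Longrightarrow> good (\<lambda>n w. Phi n w + Psi n w)"
  unfolding good_def by (auto intro!: borel_measurable_add)

lemma good_cmult: "good Phi \<Longrightarrow> good (\<lambda>n w. c * Phi n w)"
  unfolding good_def
proof
  fix n assume "\<forall>n. Phi n \<in> borel_measurable (SY \<Otimes>\<^sub>M SY)"
  then have [measurable]: "Phi n \<in> borel_measurable (SY \<Otimes>\<^sub>M SY)" by auto
  show "(\<lambda>w. c * Phi n w) \<in> borel_measurable (SY \<Otimes>\<^sub>M SY)" by measurable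
qed

lemma Fk_add: "good Phi \<Longrightarrow> good Psi \<Longrightarrow> Fk k (\<lambda>n w. Phi n w + Psi n w) = Fk k Phi + Fk k Psi"
proof (induction k arbitrary: Phi Psi)
  case 0
  have [measurable]: "Phi m \<in> borel_measurable (SY \<Otimes>\<^sub>M SY)" "Psi m \<in> borel_measurable (SY \<Otimes>\<^sub>M SY)" for m
    using 0 by (auto simp: good_def)
  show ?case unfolding Fk_0 F0_def by (rule J_add) measurable
next
  case (Suc k)
  have "Fk (Suc k) (\<lambda>n w. Phi n w + Psi n w) = Fk k (\<lambda>n w. T Phi n w + T Psi n w)"
    unfolding Fk_Suc using Suc.prems
    by (intro Fk_cong') (simp add: T_add space_pair_measure)
  also have "\<dots> = Fk k (T Phi) + Fk k (T Psi)"
    using Suc by (intro Suc.IH good_T)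
  finally show ?case unfolding Fk_Suc .
qed

lemma Fk_cmult: "good Phi \<Longrightarrow> Fk k (\<lambda>n w. c * Phi n w) = c * Fk k Phi"
proof (induction k arbitrary: Phi)
  case 0
  have [measurable]: "Phi m \<in> borel_measurable (SY \<Otimes>\<^sub>M SY)" for m
    using 0 by (auto simp: good_def)
  show ?case unfolding Fk_0 F0_def by (rule J_cmult) measurable
next
  case (Suc k)
  have "Fk (Suc k) (\<lambda>n w. c * Phi n w) = Fk k (\<lambda>n w. c * T Phi n w)"
    unfolding Fk_Suc using Suc.prems
    by (intro Fk_cong') (simp add: T_cmult space_pair_measure)
  also have "\<dots> = c * Fk k (T Phi)"
    using Suc by (intro Suc.IH good_T)
  finally show ?case unfolding Fk_Suc .
qed

lemma space_pair_iff: "z \<in> space (SY \<Otimes>\<^sub>M SY) \<longleftrightarrow> fst z \<in> space SY \<and> snd z \<in> space SY"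
  by (cases z) (auto simp: space_pair_measure)

lemma dl_meas[measurable]: "dl \<in> borel_measurable (SY \<Otimes>\<^sub>M SY)"
  unfolding dl_def[abs_def] mn_def by measurable

lemma dl_le1: assumes "z \<in> space (SY \<Otimes>\<^sub>M SY)" shows "dl z \<le> 1"
proof -
  have "dl z \<le> (\<integral>\<^sup>+g'. p (fst z) g' \<partial>SY)"
    unfolding dl_def mn_def by (intro nn_integral_mono) auto
  also have "\<dots> = 1" using assms by (simp add: p_one space_pair_iff)
  finally show ?thesis .
qed

lemma int_r1: assumes "z \<in> space (SY \<Otimes>\<^sub>M SY)" shows "(\<integral>\<^sup>+g. r1 z g \<partial>SY) = 1 - dl z"
proof -
  have [measurable]: "p (fst z) \<in> borel_measurable SY" using assms by (simp add: space_pair_iff)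
  have "(\<integral>\<^sup>+g. r1 z g \<partial>SY) = (\<integral>\<^sup>+g. p (fst z) g \<partial>SY) - dl z"
    unfolding r1_def dl_def using assms dl_le1[OF assms]
    by (intro nn_integral_diff) (auto simp: mn_def dl_def top_unique)
  then show ?thesis using assms by (simp add: p_one space_pair_iff)
qed

lemma int_r2: assumes "z \<in> space (SY \<Otimes>\<^sub>M SY)" shows "(\<integral>\<^sup>+g. r2 z g \<partial>SY) = 1 - dl z"
proof -
  have [measurable]: "p (snd z) \<in> borel_measurable SY" using assms by (simp add: space_pair_iff)
  have "(\<integral>\<^sup>+g. r2 z g \<partial>SY) = (\<integral>\<^sup>+g. p (snd z) g \<partial>SY) - dl z"
    unfolding r2_def dl_def using assms dl_le1[OF assms]
    by (intro nn_integral_diff) (auto simp: mn_def dl_def top_unique)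
  then show ?thesis using assms by (simp add: p_one space_pair_iff)
qed

lemma int_Fr1:
  assumes "z \<in> space (SY \<Otimes>\<^sub>M SY)" and [measurable]: "F \<in> borel_measurable SY"
  shows "(\<integral>\<^sup>+g. F g * r1 z g \<partial>SY) + (\<integral>\<^sup>+g. F g * mn z g \<partial>SY) = (\<integral>\<^sup>+g. F g * p (fst z) g \<partial>SY)"
proof -
  have [measurable]: "p (fst z) \<in> borel_measurable SY" using assms by (simp add: space_pair_iff)
  have "(\<integral>\<^sup>+g. F g * r1 z g \<partial>SY) + (\<integral>\<^sup>+g. F g * mn z g \<partial>SY) = (\<integral>\<^sup>+g. F g * r1 z g + F g * mn z g \<partial>SY)"
    using assms by (intro nn_integral_add[symmetric]) auto
  also have "\<dots> = (\<integral>\<^sup>+g. F g * p (fst z) g \<partial>SY)"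
    unfolding r1_def mn_def
    by (intro nn_integral_cong) (simp add: distrib_left[symmetric] diff_add_cancel_ennreal)
  finally show ?thesis .
qed

lemma int_Fr2:
  assumes "z \<in> space (SY \<Otimes>\<^sub>M SY)" and [measurable]: "F \<in> borel_measurable SY"
  shows "(\<integral>\<^sup>+g. F g * r2 z g \<partial>SY) + (\<integral>\<^sup>+g. F g * mn z g \<partial>SY) = (\<integral>\<^sup>+g. F g * p (snd z) g \<partial>SY)"
proof -
  have [measurable]: "p (snd z) \<in> borel_measurable SY" using assms by (simp add: space_pair_iff)
  have "(\<integral>\<^sup>+g. F g * r2 z g \<partial>SY) + (\<integral>\<^sup>+g. F g * mn z g \<partial>SY) = (\<integral>\<^sup>+g. F g * r2 z g + F g * mn z g \<partial>SY)"
    using assms by (intro nn_integral_add[symmetric]) auto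
  also have "\<dots> = (\<integral>\<^sup>+g. F g * p (snd z) g \<partial>SY)"
    unfolding r2_def mn_def
    by (intro nn_integral_cong) (simp add: distrib_left[symmetric] diff_add_cancel_ennreal)
  finally show ?thesis .
qed

lemma int_Fr_zero:
  assumes "z \<in> space (SY \<Otimes>\<^sub>M SY)" "1 - dl z = 0" and [measurable]: "F \<in> borel_measurable SY"
  shows "(\<integral>\<^sup>+g. F g * r1 z g \<partial>SY) = 0" "(\<integral>\<^sup>+g. F g * r2 z g \<partial>SY) = 0"
proof -
  have "AE g in SY. r1 z g = 0" "AE g in SY. r2 z g = 0"
    using int_r1[OF assms(1)] int_r2[OF assms(1)] assms
    by (simp_all add: nn_integral_0_iff_AE)
  then show "(\<integral>\<^sup>+g. F g * r1 z g \<partial>SY) = 0" "(\<integral>\<^sup>+g. F g * r2 z g \<partial>SY) = 0"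
    by (auto intro!: nn_integral_zero' elim: eventually_mono)
qed

lemma J_r_fst:
  assumes "z \<in> space (SY \<Otimes>\<^sub>M SY)" and [measurable]: "F \<in> borel_measurable SY"
  shows "J (r1 z) (r2 z) (\<lambda>w. F (fst w)) / (1 - dl z) = (\<integral>\<^sup>+g. F g * r1 z g \<partial>SY)"
proof -
  have "J (r1 z) (r2 z) (\<lambda>w. F (fst w)) = (\<integral>\<^sup>+g. F g * r1 z g \<partial>SY) * (1 - dl z)"
    using assms by (simp add: J_fst int_r2)
  moreover have "1 - dl z \<noteq> top" using diff_le_self_ennreal[of 1 "dl z"] by (auto simp: top_unique)
  ultimately show ?thesis
    using int_Fr_zero[OF assms(1) _ assms(2)]
    by (cases "1 - dl z = 0") (auto simp: ennreal_mult_divide_eq)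
qed

lemma J_r_snd:
  assumes "z \<in> space (SY \<Otimes>\<^sub>M SY)" and [measurable]: "F \<in> borel_measurable SY"
  shows "J (r1 z) (r2 z) (\<lambda>w. F (snd w)) / (1 - dl z) = (\<integral>\<^sup>+g. F g * r2 z g \<partial>SY)"
proof -
  have "J (r1 z) (r2 z) (\<lambda>w. F (snd w)) = (\<integral>\<^sup>+g. F g * r2 z g \<partial>SY) * (1 - dl z)"
    using assms by (simp add: J_snd int_r1 mult.commute)
  moreover have "1 - dl z \<noteq> top" using diff_le_self_ennreal[of 1 "dl z"] by (auto simp: top_unique)
  ultimately show ?thesis
    using int_Fr_zero[OF assms(1) _ assms(2)]
    by (cases "1 - dl z = 0") (auto simp: ennreal_mult_divide_eq)
qed

definition ct :: "('b \<Rightarrow> ennreal) \<Rightarrow> nat \<Rightarrow> 'b \<times> 'b \<Rightarrow> ennreal" where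
  "ct F n z = (if V (fst z) < d \<and> V (snd z) < d then \<integral>\<^sup>+g'. F g' * mn z g' \<partial>SY else 0)"

primrec Ck :: "nat \<Rightarrow> ('b \<Rightarrow> ennreal) \<Rightarrow> ennreal" where
  "Ck 0 F = 0"
| "Ck (Suc k) F = Ck k (P F) + Fk k (ct F)"

lemma good_ct: assumes [measurable]: "F \<in> borel_measurable SY" shows "good (ct F)"
  unfolding good_def ct_def[abs_def] mn_def by measurable

lemma good_fst: assumes [measurable]: "F \<in> borel_measurable SY" shows "good (\<lambda>n w. F (fst w))"
  unfolding good_def by measurable

lemma good_snd: assumes [measurable]: "F \<in> borel_measurable SY" shows "good (\<lambda>n w. F (snd w))"
  unfolding good_def by measurable

lemma Pk_meas[measurable]: assumes [measurable]: "F \<in> borel_measurable SY" shows "(P ^^ k) F \<in> borel_measurable SY"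
  by (induction k) auto

lemma Pk_Suc_right: "(P ^^ Suc k) F = (P ^^ k) (P F)"
  by (simp only: funpow_Suc_right comp_apply)

lemma marg_fst:
  assumes [measurable]: "F \<in> borel_measurable SY"
  shows "(\<integral>\<^sup>+g. u0 g * (P ^^ k) F g \<partial>SY) = Ck k F + Fk k (\<lambda>n w. F (fst w))"
  using assms
proof (induction k arbitrary: F)
  case 0
  then have [measurable]: "F \<in> borel_measurable SY" by simp
  show ?case unfolding Fk_0 F0_def by (simp add: J_fst nu_one mult.commute)
next
  case (Suc k)
  then have [measurable]: "F \<in> borel_measurable SY" by simp
  have pw: "P F a = ct F n (a,b) + T (\<lambda>n w. F (fst w)) n (a,b)"
    if ab: "a \<in> space SY" "b \<in> space SY" for n a b
  proof -
    have z: "(a,b) \<in> space (SY \<Otimes>\<^sub>M SY)" using ab by (simp add: space_pair_iff)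
    have [measurable]: "p a \<in> borel_measurable SY" "p b \<in> borel_measurable SY" using ab by auto
    show ?thesis
      using int_Fr1[OF z, of F] J_r_fst[OF z, of F] ab
      by (auto simp: ct_def T_def J_fst p_one P_def add.commute)
  qed
  have "(\<integral>\<^sup>+g. u0 g * (P ^^ Suc k) F g \<partial>SY) = Ck k (P F) + Fk k (\<lambda>n w. P F (fst w))"
    unfolding Pk_Suc_right by (rule Suc.IH) measurable
  also have "Fk k (\<lambda>n w. P F (fst w)) = Fk k (\<lambda>n w. ct F n w + T (\<lambda>n w. F (fst w)) n w)"
    by (intro Fk_cong') (simp add: pw)
  also have "\<dots> = Fk k (ct F) + Fk (Suc k) (\<lambda>n w. F (fst w))"
    unfolding Fk_Suc by (intro Fk_add good_ct good_T good_fst) measurable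
  finally show ?case by (simp add: add.assoc)
qed

lemma marg_snd:
  assumes [measurable]: "F \<in> borel_measurable SY"
  shows "(\<integral>\<^sup>+g. nu g * (P ^^ k) F g \<partial>SY) = Ck k F + Fk k (\<lambda>n w. F (snd w))"
  using assms
proof (induction k arbitrary: F)
  case 0
  then have [measurable]: "F \<in> borel_measurable SY" by simp
  show ?case unfolding Fk_0 F0_def by (simp add: J_snd u0_one mult.commute)
next
  case (Suc k)
  then have [measurable]: "F \<in> borel_measurable SY" by simp
  have pw: "P F b = ct F n (a,b) + T (\<lambda>n w. F (snd w)) n (a,b)"
    if ab: "a \<in> space SY" "b \<in> space SY" for n a b
  proof -
    have z: "(a,b) \<in> space (SY \<Otimes>\<^sub>M SY)" using ab by (simp add: space_pair_iff)
    have [measurable]: "p a \<in> borel_measurable SY" "p b \<in> borel_measurable SY" using ab by auto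
    show ?thesis
      using int_Fr2[OF z, of F] J_r_snd[OF z, of F] ab
      by (auto simp: ct_def T_def J_snd p_one P_def add.commute)
  qed
  have "(\<integral>\<^sup>+g. nu g * (P ^^ Suc k) F g \<partial>SY) = Ck k (P F) + Fk k (\<lambda>n w. P F (snd w))"
    unfolding Pk_Suc_right by (rule Suc.IH) measurable
  also have "Fk k (\<lambda>n w. P F (snd w)) = Fk k (\<lambda>n w. ct F n w + T (\<lambda>n w. F (snd w)) n w)"
    by (intro Fk_cong') (simp add: pw)
  also have "\<dots> = Fk k (ct F) + Fk (Suc k) (\<lambda>n w. F (snd w))"
    unfolding Fk_Suc by (intro Fk_add good_ct good_T good_snd) measurable
  finally show ?case by (simp add: add.assoc)
qed

lemma nu_statP: "G \<in> borel_measurable SY \<Longrightarrow> (\<integral>\<^sup>+g. nu g * P G g \<partial>SY) = (\<integral>\<^sup>+g. nu g * G g \<partial>SY)"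
  unfolding P_def by (rule nu_stat)

lemma nu_Pk:
  assumes [measurable]: "F \<in> borel_measurable SY"
  shows "(\<integral>\<^sup>+g. nu g * (P ^^ k) F g \<partial>SY) = (\<integral>\<^sup>+g. nu g * F g \<partial>SY)"
proof (induction k)
  case (Suc k)
  have "(\<integral>\<^sup>+g. nu g * (P ^^ Suc k) F g \<partial>SY) = (\<integral>\<^sup>+g. nu g * P ((P ^^ k) F) g \<partial>SY)" by simp
  also have "\<dots> = (\<integral>\<^sup>+g. nu g * (P ^^ k) F g \<partial>SY)"
    by (rule nu_statP) measurable
  finally show ?case using Suc by simp
qed simp

end

context yc begin
interpretation pair_sigma_finite SY SY ..
lemma space_Q: "space Q = space SY"
  using Q(2) by (rule sets_eq_imp_space_eq)

lemma dl_ge: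
  assumes ab: "a \<in> space SY" "b \<in> space SY" and C: "V a < d" "V b < d"
  shows "ennreal (min eps 1) \<le> dl (a,b)"
proof -
  interpret Qp: prob_space Q by (rule Q(1))
  have [measurable]: "p a \<in> borel_measurable SY" "p b \<in> borel_measurable SY" using ab by auto
  define B where "B = {g \<in> space SY. p a g \<le> p b g}"
  have B[measurable]: "B \<in> sets SY" unfolding B_def by measurable
  have B2[measurable]: "space SY - B \<in> sets SY" by auto
  have "dl (a,b) = (\<integral>\<^sup>+g. p a g * indicator B g + p b g * indicator (space SY - B) g \<partial>SY)"
    unfolding dl_def mn_def by (intro nn_integral_cong) (auto simp: B_def indicator_def min_def)
  also have "\<dots> = (\<integral>\<^sup>+g. p a g * indicator B g \<partial>SY) + (\<integral>\<^sup>+g. p b g * indicator (space SY - B) g \<partial>SY)"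
    by (rule nn_integral_add) measurable
  also have "\<dots> \<ge> ennreal eps * emeasure Q B + ennreal eps * emeasure Q (space SY - B)"
    by (intro add_mono minor ab C B B2)
  finally have "ennreal eps * (emeasure Q B + emeasure Q (space SY - B)) \<le> dl (a,b)"
    by (simp add: distrib_left)
  also have "emeasure Q B + emeasure Q (space SY - B) = emeasure Q (space SY)"
  proof -
    have BQ: "B \<in> sets Q" "space SY - B \<in> sets Q" using Q(2) by auto
    have "emeasure Q B + emeasure Q (space SY - B) = emeasure Q (B \<union> (space SY - B))"
      by (rule plus_emeasure[OF BQ]) auto
    also have "B \<union> (space SY - B) = space SY" using sets.sets_into_space[OF B] by auto
    finally show ?thesis .
  qed
  also have "\<dots> = 1" using Qp.emeasure_space_1 space_Q by simp
  finally have "ennreal eps \<le> dl (a,b)" by simp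
  then show ?thesis by (rule order.trans[rotated]) (simp add: ennreal_leI)
qed

lemma Fk_potential:
  assumes "good Phi" and T_le: "\<And>n a b. a \<in> space SY \<Longrightarrow> b \<in> space SY \<Longrightarrow> T Phi n (a,b) \<le> c * Phi n (a,b)"
  shows "Fk k Phi \<le> c ^ k * F0 Phi"
proof (induction k)
  case 0 then show ?case by (simp add: Fk_0)
next
  case (Suc k)
  have "Fk (Suc k) Phi = Fk k (T Phi)" by (rule Fk_Suc)
  also have "\<dots> \<le> Fk k (\<lambda>n w. c * Phi n w)"
    by (intro Fk_mono) (auto simp: leq_def T_le)
  also have "\<dots> = c * Fk k Phi" using assms(1) by (rule Fk_cmult)
  also have "\<dots> \<le> c * (c ^ k * F0 Phi)" by (intro mult_left_mono Suc.IH) auto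
  finally show ?case by (simp add: mult.assoc)
qed

lemma G_bound:
  "Fk k (\<lambda>n w. ennreal ((1 - min eps 1) ^ (j - n))) \<le> ennreal ((1 - min eps 1) ^ j)"
proof -
  let ?e = "min eps 1"
  let ?G = "\<lambda>n (w::'b\<times>'b). ennreal ((1 - ?e) ^ (j - n))"
  have e: "0 \<le> 1 - ?e" "1 - ?e \<le> 1" using eps by auto
  have "Fk k ?G \<le> 1 ^ k * F0 ?G"
  proof (rule Fk_potential)
    show "good ?G" unfolding good_def by auto
    fix n a b assume ab: "a \<in> space SY" "b \<in> space SY"
    have z: "(a,b) \<in> space (SY \<Otimes>\<^sub>M SY)" using ab by (simp add: space_pair_iff)
    have [measurable]: "p a \<in> borel_measurable SY" "p b \<in> borel_measurable SY" using ab by auto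
    show "T ?G n (a, b) \<le> 1 * ?G n (a, b)"
    proof (cases "V a < d \<and> V b < d")
      case True
      let ?c = "ennreal ((1 - ?e) ^ (j - Suc n))"
      have "T ?G n (a,b) = ?c * (1 - dl (a,b)) * (1 - dl (a,b)) / (1 - dl (a,b))"
        using True z by (simp add: T_def J_const int_r1 int_r2)
      also have "\<dots> \<le> ?c * (1 - dl (a,b))"
        by (cases "1 - dl (a,b) = 0") (auto simp: ennreal_mult_divide_eq)
      also have "\<dots> \<le> ?c * (1 - ennreal ?e)"
        using dl_ge[OF ab] True by (intro mult_left_mono ennreal_minus_mono) auto
      also have "\<dots> = ennreal ((1 - ?e) ^ (j - Suc n) * (1 - ?e))"
        using e ennreal_minus[of ?e 1] eps by (simp add: ennreal_mult)
      also have "\<dots> \<le> ennreal ((1 - ?e) ^ (j - n))"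
      proof (intro ennreal_leI)
        show "(1 - ?e) ^ (j - Suc n) * (1 - ?e) \<le> (1 - ?e) ^ (j - n)"
        proof (cases "n < j")
          case True
          then have "j - n = Suc (j - Suc n)" by simp
          then show ?thesis by (simp add: mult.commute)
        next
          case False
          then show ?thesis using e by simp
        qed
      qed
      finally show ?thesis by simp
    next
      case False
      have "T ?G n (a,b) = J (p a) (p b) (\<lambda>w. ennreal ((1 - ?e) ^ (j - n)))"
        unfolding T_def using False by (simp only: fst_conv snd_conv if_not_P if_False)
      also have "\<dots> = ennreal ((1 - ?e) ^ (j - n))"
        using ab by (simp add: J_const[OF p_meas2 p_meas2] p_one)
      finally show ?thesis by simp
    qed
  qed
  also have "F0 ?G = ennreal ((1 - ?e) ^ j)"
    by (simp add: F0_def J_const u0_one nu_one)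
  finally show ?thesis by simp
qed

end

context yc begin
interpretation pair_sigma_finite SY SY ..

lemma ennreal_plus3: "0 \<le> x \<Longrightarrow> 0 \<le> y \<Longrightarrow> 0 \<le> z \<Longrightarrow> ennreal (x + y + z) = ennreal x + ennreal y + ennreal z"
  using ennreal_plus[of "x + y" z] ennreal_plus[of x y] by simp

definition "al = (1 + 2 * L + lam * d) / (1 + d)"
definition "AA = 1 + 2 * (lam * d + L)"
definition "th = al / AA"
definition "hh w = ennreal (1 + V (fst w) + V (snd w))"

lemma cst: "0 < d" "0 < al" "al \<le> 1" "1 \<le> AA" "0 < th" "th \<le> 1" "th * AA = al"
proof -
  have l1: "0 < 1 - lam" using lam by simp
  have "0 \<le> 2 * L / (1 - lam)" using L l1 by simp
  then show d0: "0 < d" using d by simp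
  have "2 * L < d * (1 - lam)" using d l1 by (simp add: pos_divide_less_eq)
  then have "1 + 2 * L + lam * d < 1 + d" by (simp add: algebra_simps)
  moreover have "0 < 1 + 2 * L + lam * d" using L lam d0 by (simp add: add_pos_nonneg)
  ultimately show "0 < al" "al \<le> 1" unfolding al_def using d0 by (auto simp: divide_le_eq_1)
  show A1: "1 \<le> AA" unfolding AA_def using L lam d0 by simp
  then show "0 < th" unfolding th_def using \<open>0 < al\<close> by simp
  show "th \<le> 1" unfolding th_def using \<open>al \<le> 1\<close> A1 \<open>0 < al\<close> by (simp add: divide_le_eq_1)
  show "th * AA = al" unfolding th_def using A1 by simp
qed

lemma real_out:
  assumes "0 \<le> x" "0 \<le> y" "\<not> (x < d \<and> y < d)"
  shows "1 + (lam * x + L) + (lam * y + L) \<le> al * (1 + x + y)"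
proof -
  let ?s = "x + y"
  have s: "d \<le> ?s" using assms by auto
  have "0 \<le> (?s - d) * (1 + 2 * L - lam)" using s L lam by (intro mult_nonneg_nonneg) auto
  then have "(1 + 2 * L + lam * ?s) * (1 + d) \<le> (1 + 2 * L + lam * d) * (1 + ?s)"
    by (simp add: algebra_simps)
  then have "1 + 2 * L + lam * ?s \<le> (1 + 2 * L + lam * d) * (1 + ?s) / (1 + d)"
    using cst(1) by (simp add: pos_le_divide_eq)
  then show ?thesis unfolding al_def by (simp add: algebra_simps)
qed

lemma real_in:
  assumes "x < d" "y < d"
  shows "1 + (lam * x + L) + (lam * y + L) \<le> AA"
proof -
  have "lam * x \<le> lam * d" "lam * y \<le> lam * d" using assms lam by (auto intro: mult_left_mono)
  then show ?thesis unfolding AA_def by simp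
qed

lemma J_cong: "(\<And>a b. a \<in> space SY \<Longrightarrow> b \<in> space SY \<Longrightarrow> Phi (a,b) = Psi (a,b)) \<Longrightarrow> J f1 f2 Phi = J f1 f2 Psi"
  by (intro antisym J_mono) auto

lemma hh_meas[measurable]: "hh \<in> borel_measurable (SY \<Otimes>\<^sub>M SY)"
  unfolding hh_def[abs_def] by measurable

lemma J_hh:
  assumes [measurable]: "f1 \<in> borel_measurable SY" "f2 \<in> borel_measurable SY"
  shows "J f1 f2 hh = (\<integral>\<^sup>+g. f1 g \<partial>SY) * (\<integral>\<^sup>+g. f2 g \<partial>SY)
     + (\<integral>\<^sup>+g. ennreal (V g) * f1 g \<partial>SY) * (\<integral>\<^sup>+g. f2 g \<partial>SY)
     + (\<integral>\<^sup>+g. f1 g \<partial>SY) * (\<integral>\<^sup>+g. ennreal (V g) * f2 g \<partial>SY)"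
proof -
  have "J f1 f2 hh = J f1 f2 (\<lambda>w. (1 + ennreal (V (fst w))) + ennreal (V (snd w)))"
    by (intro J_cong) (simp add: hh_def V_nn ennreal_plus3)
  also have "\<dots> = J f1 f2 (\<lambda>w. 1 + ennreal (V (fst w))) + J f1 f2 (\<lambda>w. ennreal (V (snd w)))"
    by (rule J_add) measurable
  also have "J f1 f2 (\<lambda>w. 1 + ennreal (V (fst w))) = J f1 f2 (\<lambda>w. 1) + J f1 f2 (\<lambda>w. ennreal (V (fst w)))"
    by (rule J_add) measurable
  also have "J f1 f2 (\<lambda>w. ennreal (V (fst w))) = (\<integral>\<^sup>+g. ennreal (V g) * f1 g \<partial>SY) * (\<integral>\<^sup>+g. f2 g \<partial>SY)"
    by (rule J_fst) measurable
  also have "J f1 f2 (\<lambda>w. ennreal (V (snd w))) = (\<integral>\<^sup>+g. f1 g \<partial>SY) * (\<integral>\<^sup>+g. ennreal (V g) * f2 g \<partial>SY)"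
    by (rule J_snd) measurable
  also have "J f1 f2 (\<lambda>w. 1) = (\<integral>\<^sup>+g. f1 g \<partial>SY) * (\<integral>\<^sup>+g. f2 g \<partial>SY)"
    using J_const[OF assms, of 1] by simp
  finally show ?thesis .
qed

definition "Theta n w = ennreal (th ^ n) * hh w"

lemma good_Theta: "good Theta"
  unfolding good_def Theta_def[abs_def] by measurable

lemma hh_ge1: "a \<in> space SY \<Longrightarrow> b \<in> space SY \<Longrightarrow> 1 \<le> hh (a,b)"
  unfolding hh_def using V_nn by (simp add: ennreal_ge_1)

lemma div_cancel_le: "(x * (X::ennreal)) / x \<le> X" if "x \<le> 1" for x
proof (cases "x = 0")
  case False
  moreover have "x \<noteq> top" using that by (auto simp: top_unique)
  ultimately show ?thesis by (simp add: mult.commute[of x] ennreal_mult_divide_eq)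
qed simp

lemma T_Theta:
  assumes ab: "a \<in> space SY" "b \<in> space SY"
  shows "T Theta n (a,b) \<le> ennreal al * Theta n (a,b)"
proof -
  have z: "(a,b) \<in> space (SY \<Otimes>\<^sub>M SY)" using ab by (simp add: space_pair_iff)
  have [measurable]: "p a \<in> borel_measurable SY" "p b \<in> borel_measurable SY"
    "r1 (a,b) \<in> borel_measurable SY" "r2 (a,b) \<in> borel_measurable SY" using ab z by auto
  let ?PVa = "\<integral>\<^sup>+g. ennreal (V g) * p a g \<partial>SY"
  let ?PVb = "\<integral>\<^sup>+g. ennreal (V g) * p b g \<partial>SY"
  have PVsum: "1 + ?PVa + ?PVb \<le> ennreal (1 + (lam * V a + L) + (lam * V b + L))"
  proof -
    have "1 + ?PVa + ?PVb \<le> 1 + ennreal (lam * V a + L) + ennreal (lam * V b + L)"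
      using drift ab by (intro add_mono) auto
    also have "\<dots> = ennreal (1 + (lam * V a + L) + (lam * V b + L))"
      using V_nn[OF ab(1)] V_nn[OF ab(2)] lam L by (subst ennreal_plus3) auto
    finally show ?thesis .
  qed
  have hh1: "1 \<le> hh (a,b)" using hh_ge1[OF ab] .
  show ?thesis
  proof (cases "V a < d \<and> V b < d")
    case True
    let ?x = "1 - dl (a,b)"
    let ?IV1 = "\<integral>\<^sup>+g. ennreal (V g) * r1 (a,b) g \<partial>SY"
    let ?IV2 = "\<integral>\<^sup>+g. ennreal (V g) * r2 (a,b) g \<partial>SY"
    have x1: "?x \<le> 1" by (rule diff_le_self_ennreal)
    have "J (r1 (a,b)) (r2 (a,b)) hh = ?x * ?x + ?IV1 * ?x + ?x * ?IV2"
      using z by (simp add: J_hh int_r1 int_r2)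
    also have "\<dots> = ?x * (?x + ?IV1 + ?IV2)" by (simp add: algebra_simps)
    finally have Jeq: "J (r1 (a,b)) (r2 (a,b)) hh = ?x * (?x + ?IV1 + ?IV2)" .
    have IV1: "?IV1 \<le> ?PVa" unfolding r1_def
      by (intro nn_integral_mono mult_left_mono) (auto intro: diff_le_self_ennreal)
    have IV2: "?IV2 \<le> ?PVb" unfolding r2_def
      by (intro nn_integral_mono mult_left_mono) (auto intro: diff_le_self_ennreal)
    have "T Theta n (a,b) = ennreal (th ^ Suc n) * J (r1 (a,b)) (r2 (a,b)) hh / ?x"
      using True z unfolding T_def Theta_def by (simp add: J_cmult divide_ennreal_def mult.assoc)
    also have "\<dots> = ennreal (th ^ Suc n) * ((?x * (?x + ?IV1 + ?IV2)) / ?x)"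
      by (simp add: Jeq divide_ennreal_def mult.assoc)
    also have "\<dots> \<le> ennreal (th ^ Suc n) * (?x + ?IV1 + ?IV2)"
      by (intro mult_left_mono div_cancel_le x1) auto
    also have "\<dots> \<le> ennreal (th ^ Suc n) * (1 + ?PVa + ?PVb)"
      by (intro mult_left_mono add_mono x1 IV1 IV2) auto
    also have "\<dots> \<le> ennreal (th ^ Suc n) * ennreal AA"
      using PVsum real_in[OF True[THEN conjunct1] True[THEN conjunct2]]
      by (intro mult_left_mono) (auto intro: order.trans ennreal_leI)
    also have "\<dots> = ennreal al * ennreal (th ^ n)"
      using cst by (simp add: ennreal_mult[symmetric] mult.assoc mult.commute[of th] del: ennreal_mult)
    also have "\<dots> \<le> ennreal al * Theta n (a,b)"
      unfolding Theta_def using mult_left_mono[OF hh1, of "ennreal (th^n)"] by (intro mult_left_mono) auto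
    finally show ?thesis .
  next
    case False
    have "T Theta n (a,b) = J (p a) (p b) (Theta n)"
      unfolding T_def using False by (simp only: fst_conv snd_conv if_not_P if_False)
    also have "\<dots> = ennreal (th ^ n) * J (p a) (p b) hh"
      unfolding Theta_def by (rule J_cmult) measurable
    also have "J (p a) (p b) hh = 1 + ?PVa + ?PVb"
      using ab by (simp add: J_hh p_one)
    also have "ennreal (th ^ n) * (1 + ?PVa + ?PVb) \<le> ennreal (th ^ n) * ennreal (al * (1 + V a + V b))"
      using PVsum real_out[OF V_nn[OF ab(1)] V_nn[OF ab(2)] False]
      by (intro mult_left_mono) (auto intro: order.trans ennreal_leI)
    also have "\<dots> = ennreal al * Theta n (a,b)"
      unfolding Theta_def hh_def using cst V_nn[OF ab(1)] V_nn[OF ab(2)]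
      by (simp add: ennreal_mult mult_ac)
    finally show ?thesis .
  qed
qed

lemma Theta_bound:
  "Fk k Theta \<le> ennreal al ^ k * (1 + (\<integral>\<^sup>+g. ennreal (V g) * u0 g \<partial>SY) + (\<integral>\<^sup>+g. ennreal (V g) * nu g \<partial>SY))"
proof -
  have "Fk k Theta \<le> ennreal al ^ k * F0 Theta"
    using good_Theta T_Theta by (rule Fk_potential)
  also have "F0 Theta = J u0 nu hh" unfolding F0_def Theta_def by simp
  also have "\<dots> = 1 + (\<integral>\<^sup>+g. ennreal (V g) * u0 g \<partial>SY) + (\<integral>\<^sup>+g. ennreal (V g) * nu g \<partial>SY)"
    by (simp add: J_hh u0_one nu_one)
  finally show ?thesis .
qed

end

context yc begin

lemma P_mono: "(\<And>g. g \<in> space SY \<Longrightarrow> F g \<le> G g) \<Longrightarrow> P F x \<le> P G x"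
  unfolding P_def by (intro nn_integral_mono mult_right_mono) auto

lemma P_cong: "(\<And>g. g \<in> space SY \<Longrightarrow> F g = G g) \<Longrightarrow> P F x = P G x"
  unfolding P_def by (intro nn_integral_cong) auto

lemma P_const: "g \<in> space SY \<Longrightarrow> P (\<lambda>_. x) g = x"
  unfolding P_def using p_one by (simp add: nn_integral_cmult)

lemma Pk_const: "g \<in> space SY \<Longrightarrow> (P ^^ k) (\<lambda>_. x) g = x"
proof (induction k arbitrary: g)
  case (Suc k)
  have "(P ^^ Suc k) (\<lambda>_. x) g = P (\<lambda>g'. (P ^^ k) (\<lambda>_. x) g') g" by simp
  also have "\<dots> = P (\<lambda>_. x) g" using Suc.IH by (intro P_cong) auto
  finally show ?case using P_const[OF Suc.prems] by simp
qed simp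

lemma Pk_mono: "(\<And>g. g \<in> space SY \<Longrightarrow> F g \<le> G g) \<Longrightarrow> x \<in> space SY \<Longrightarrow> (P ^^ k) F x \<le> (P ^^ k) G x"
proof (induction k arbitrary: x)
  case 0 then show ?case by simp
next
  case (Suc k) then show ?case by (simp add: P_mono)
qed

lemma P_lin:
  assumes g: "g \<in> space SY" and ab: "0 \<le> a" "0 \<le> b"
  shows "P (\<lambda>g'. ennreal (a * V g' + b)) g = ennreal a * (\<integral>\<^sup>+g'. ennreal (V g') * p g g' \<partial>SY) + ennreal b"
proof -
  have [measurable]: "p g \<in> borel_measurable SY" using g by simp
  have "P (\<lambda>g'. ennreal (a * V g' + b)) g = (\<integral>\<^sup>+g'. ennreal a * (ennreal (V g') * p g g') + ennreal b * p g g' \<partial>SY)"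
    unfolding P_def using ab V_nn
    by (intro nn_integral_cong) (simp add: ennreal_plus ennreal_mult distrib_right mult.assoc)
  also have "\<dots> = ennreal a * (\<integral>\<^sup>+g'. ennreal (V g') * p g g' \<partial>SY) + ennreal b * (\<integral>\<^sup>+g'. p g g' \<partial>SY)"
    by (simp add: nn_integral_add nn_integral_cmult)
  finally show ?thesis using p_one[OF g] by simp
qed

lemma aux_id: "c * (1 - l) = L' \<Longrightarrow> l ^ k * (l * v + L') + c * (1 - l ^ k) = l ^ Suc k * v + c * (1 - l ^ Suc k)"
  for c l v L' :: real
  by (hypsubst) (simp add: algebra_simps)

lemma PkV:
  assumes g: "g \<in> space SY"
  shows "(P ^^ k) (\<lambda>g. ennreal (V g)) g \<le> ennreal (lam ^ k * V g + L / (1 - lam) * (1 - lam ^ k))"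
  using g
proof (induction k arbitrary: g)
  case 0 then show ?case by simp
next
  case (Suc k)
  let ?c = "L / (1 - lam)"
  have c: "0 \<le> ?c" "?c * (1 - lam) = L" using L lam by auto
  have lk: "0 \<le> lam ^ k" "lam ^ k \<le> 1" using lam by (auto intro: power_le_one)
  have "(P ^^ Suc k) (\<lambda>g. ennreal (V g)) g = P ((P ^^ k) (\<lambda>g. ennreal (V g))) g" by simp
  also have "\<dots> \<le> P (\<lambda>g'. ennreal (lam ^ k * V g' + ?c * (1 - lam ^ k))) g"
    by (intro P_mono Suc.IH)
  also have "\<dots> = ennreal (lam ^ k) * (\<integral>\<^sup>+g'. ennreal (V g') * p g g' \<partial>SY) + ennreal (?c * (1 - lam ^ k))"
  proof (rule P_lin[OF Suc.prems lk(1)])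
    show "0 \<le> ?c * (1 - lam ^ k)" using c(1) lk(2) by (intro mult_nonneg_nonneg) simp_all
  qed
  also have "\<dots> \<le> ennreal (lam ^ k) * ennreal (lam * V g + L) + ennreal (?c * (1 - lam ^ k))"
    using drift[OF Suc.prems] by (intro add_mono mult_left_mono) auto
  also have "\<dots> = ennreal (lam ^ k * (lam * V g + L) + ?c * (1 - lam ^ k))"
    using lk c V_nn[OF Suc.prems] lam L by (simp add: ennreal_mult ennreal_plus)
  also have "lam ^ k * (lam * V g + L) + ?c * (1 - lam ^ k) = lam ^ Suc k * V g + ?c * (1 - lam ^ Suc k)"
    using aux_id[OF c(2)] .
  finally show ?case .
qed

lemma min_add_aux: "min ((x::ennreal) + y) N \<le> c + min x N" if "y \<le> c"
proof (cases "x \<le> N")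
  case True
  then have "min (x + y) N \<le> x + y" by simp
  also have "\<dots> \<le> c + x" using that by (simp add: add.commute add_right_mono)
  finally show ?thesis using True by simp
next
  case False
  then have "min (x + y) N \<le> N" by simp
  also have "\<dots> \<le> c + N" by simp
  finally show ?thesis using False by simp
qed

lemma nuV: "(\<integral>\<^sup>+g. ennreal (V g) * nu g \<partial>SY) \<le> ennreal (L / (1 - lam))"
proof -
  let ?c = "L / (1 - lam)"
  have c0: "0 \<le> ?c" using L lam by simp
  define VN where "VN N g = min (ennreal (V g)) (of_nat N)" for N :: nat and g
  define f where "f N k g = min (ennreal (lam ^ k) * ennreal (V g)) (of_nat N)" for N :: nat and k :: nat and g
  have VN_meas[measurable]: "VN N \<in> borel_measurable SY" for N unfolding VN_def by measurable
  have f_meas[measurable]: "f N k \<in> borel_measurable SY" for N k unfolding f_def by measurable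
  have step: "(\<integral>\<^sup>+g. nu g * VN N g \<partial>SY) \<le> ennreal ?c + (\<integral>\<^sup>+g. nu g * f N k g \<partial>SY)" for N k
  proof -
    have pw: "(P ^^ k) (VN N) g \<le> ennreal ?c + f N k g" if g: "g \<in> space SY" for g
    proof -
      have lk: "0 \<le> lam ^ k" "lam ^ k \<le> 1" using lam by (auto intro: power_le_one)
      have "(P ^^ k) (VN N) g \<le> (P ^^ k) (\<lambda>g. ennreal (V g)) g"
        using g by (intro Pk_mono) (auto simp: VN_def)
      also have "\<dots> \<le> ennreal (lam ^ k * V g + ?c * (1 - lam ^ k))" using g by (rule PkV)
      also have "\<dots> = ennreal (lam ^ k) * ennreal (V g) + ennreal (?c * (1 - lam ^ k))"
      proof -
        have y0: "0 \<le> ?c * (1 - lam ^ k)" using c0 lk by (intro mult_nonneg_nonneg) simp_all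
        have x0: "0 \<le> lam ^ k * V g" using lk V_nn[OF g] by simp
        show ?thesis
          by (simp only: ennreal_plus[OF x0 y0] ennreal_mult[OF lk(1) V_nn[OF g]])
      qed
      finally have 1: "(P ^^ k) (VN N) g \<le> ennreal (lam ^ k) * ennreal (V g) + ennreal (?c * (1 - lam ^ k))" .
      have "(P ^^ k) (VN N) g \<le> (P ^^ k) (\<lambda>_. of_nat N) g"
        using g by (intro Pk_mono) (auto simp: VN_def)
      also have "\<dots> = of_nat N" using g by (rule Pk_const)
      finally have 2: "(P ^^ k) (VN N) g \<le> of_nat N" .
      have "(P ^^ k) (VN N) g \<le> min (ennreal (lam ^ k) * ennreal (V g) + ennreal (?c * (1 - lam ^ k))) (of_nat N)"
        using 1 2 by simp
      also have "\<dots> \<le> ennreal ?c + f N k g"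
      proof -
        have "?c * (1 - lam ^ k) \<le> ?c * 1" using c0 lk by (intro mult_left_mono) simp_all
        then show ?thesis unfolding f_def by (intro min_add_aux ennreal_leI) simp
      qed
      finally show ?thesis .
    qed
    have "(\<integral>\<^sup>+g. nu g * VN N g \<partial>SY) = (\<integral>\<^sup>+g. nu g * (P ^^ k) (VN N) g \<partial>SY)"
      by (rule nu_Pk[symmetric]) measurable
    also have "\<dots> \<le> (\<integral>\<^sup>+g. ennreal ?c * nu g + nu g * f N k g \<partial>SY)"
      using pw by (intro nn_integral_mono) (simp add: distrib_left[symmetric] mult.commute mult_left_mono)
    also have "\<dots> = ennreal ?c + (\<integral>\<^sup>+g. nu g * f N k g \<partial>SY)"
      by (simp add: nn_integral_add nn_integral_cmult nu_one)
    finally show ?thesis .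
  qed
  have lim: "(INF k. \<integral>\<^sup>+g. nu g * f N k g \<partial>SY) = 0" for N
  proof -
    let ?Nu = "density SY nu"
    have eqd: "(\<integral>\<^sup>+g. nu g * f N k g \<partial>SY) = (\<integral>\<^sup>+g. f N k g \<partial>?Nu)" for k
      by (rule nn_integral_density[symmetric]) measurable
    have dec: "decseq (f N)"
    proof (intro decseq_SucI le_funI)
      fix k g
      have "ennreal (lam ^ Suc k) \<le> ennreal (lam ^ k)"
        using lam by (intro ennreal_leI) (simp add: mult_left_le_one_le)
      then show "f N (Suc k) g \<le> f N k g"
        unfolding f_def by (intro min.mono mult_right_mono) auto
    qed
    have fin: "(\<integral>\<^sup>+g. f N k g \<partial>?Nu) < \<infinity>" for k
    proof -
      have "(\<integral>\<^sup>+g. f N k g \<partial>?Nu) \<le> (\<integral>\<^sup>+g. of_nat N \<partial>?Nu)"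
        unfolding f_def by (intro nn_integral_mono) simp
      also have "\<dots> = of_nat N * emeasure ?Nu (space SY)" by simp
      also have "emeasure ?Nu (space SY) = 1"
        by (simp add: emeasure_density nu_one cong: nn_integral_cong)
      finally show ?thesis by (simp add: order.strict_trans1 of_nat_less_top)
    qed
    have inf0: "(INF k. f N k g) = 0" for g
    proof -
      let ?X = "\<lambda>k. ennreal (lam ^ k * max 0 (V g))"
      have "?X \<longlonglongrightarrow> ennreal 0"
        using lam by (intro tendsto_ennrealI tendsto_mult_left_zero LIMSEQ_power_zero) simp
      moreover have "(INF k. f N k g) \<le> ?X n" for n
      proof -
        have "(INF k. f N k g) \<le> f N n g" by (rule INF_lower) simp
        also have "\<dots> \<le> ennreal (lam ^ n) * ennreal (V g)" unfolding f_def by simp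
        also have "\<dots> = ?X n" using lam by (simp add: ennreal_mult ennreal_max_0)
        finally show ?thesis .
      qed
      ultimately have "(INF k. f N k g) \<le> ennreal 0"
        by (intro LIMSEQ_le_const[of ?X]) auto
      then show ?thesis by simp
    qed
    have "(INF k. \<integral>\<^sup>+g. f N k g \<partial>?Nu) = (\<integral>\<^sup>+g. (INF k. f N k g) \<partial>?Nu)"
      by (rule nn_integral_monotone_convergence_INF_decseq[symmetric, OF dec _ fin]) measurable
    also have "\<dots> = 0" by (simp add: inf0)
    finally show ?thesis by (simp add: eqd)
  qed
  have bnd: "(\<integral>\<^sup>+g. nu g * VN N g \<partial>SY) \<le> ennreal ?c" for N
  proof -
    have "(\<integral>\<^sup>+g. nu g * VN N g \<partial>SY) \<le> (INF k. ennreal ?c + (\<integral>\<^sup>+g. nu g * f N k g \<partial>SY))"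
      by (intro INF_greatest step)
    also have "\<dots> = ennreal ?c" by (simp add: INF_ennreal_const_add lim)
    finally show ?thesis .
  qed
  have sup: "(SUP N. VN N g * nu g) = ennreal (V g) * nu g" for g
  proof -
    have "(SUP N. VN N g) = ennreal (V g)"
    proof (rule antisym)
      show "(SUP N. VN N g) \<le> ennreal (V g)" unfolding VN_def by (intro SUP_least) simp
      obtain n :: nat where n: "V g \<le> real n" using real_arch_simple by blast
      then have "ennreal (V g) \<le> of_nat n" by (simp add: ennreal_of_nat_eq_real_of_nat ennreal_leI)
      then have "VN n g = ennreal (V g)" unfolding VN_def by simp
      then show "ennreal (V g) \<le> (SUP N. VN N g)" by (metis SUP_upper UNIV_I)
    qed
    then show ?thesis by (simp add: SUP_mult_right_ennreal[symmetric])
  qed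
  have inc: "incseq (\<lambda>N g. VN N g * nu g)"
    unfolding VN_def by (intro incseq_SucI le_funI mult_right_mono min.mono) auto
  have "(\<integral>\<^sup>+g. ennreal (V g) * nu g \<partial>SY) = (\<integral>\<^sup>+g. (SUP N. VN N g * nu g) \<partial>SY)"
    by (simp add: sup)
  also have "\<dots> = (SUP N. \<integral>\<^sup>+g. VN N g * nu g \<partial>SY)"
    by (rule nn_integral_monotone_convergence_SUP[OF inc]) measurable
  also have "\<dots> \<le> ennreal ?c"
    using bnd by (intro SUP_least) (simp add: mult.commute)
  finally show ?thesis .
qed

end

context yc begin

lemma abs_diff_le_max: "0 \<le> x \<Longrightarrow> 0 \<le> y \<Longrightarrow> \<bar>x - y\<bar> \<le> max x (y::real)"
  by (auto simp: abs_le_iff max_def)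

theorem Y_main:
  assumes F[measurable]: "F \<in> borel_measurable SY" and F1: "\<And>g. g \<in> space SY \<Longrightarrow> F g \<le> 1"
    and r: "0 < r" "r < 1"
  shows "ennreal \<bar>enn2real (\<integral>\<^sup>+g. u0 g * (P ^^ k) F g \<partial>SY) - enn2real (\<integral>\<^sup>+g. nu g * F g \<partial>SY)\<bar>
     \<le> ennreal ((max ((1 - eps) powr r) (al powr (1 - r) * AA powr r)) ^ k) *
        (ennreal (2 + L / (1 - lam)) + (\<integral>\<^sup>+g. ennreal (V g) * u0 g \<partial>SY))"
proof -
  define j where "j = nat \<lceil>r * k\<rceil>"
  define rho where "rho = max ((1 - eps) powr r) (al powr (1 - r) * AA powr r)"
  define C where "C = Ck k F"
  define M1 where "M1 = Fk k (\<lambda>n w. F (fst w))"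
  define M2 where "M2 = Fk k (\<lambda>n w. F (snd w))"
  define Mk where "Mk = Fk k (\<lambda>n (w::'b\<times>'b). 1::ennreal)"
  define IVu where "IVu = (\<integral>\<^sup>+g. ennreal (V g) * u0 g \<partial>SY)"
  define IVn where "IVn = (\<integral>\<^sup>+g. ennreal (V g) * nu g \<partial>SY)"
  let ?U = "\<integral>\<^sup>+g. u0 g * (P ^^ k) F g \<partial>SY"
  let ?W = "\<integral>\<^sup>+g. nu g * F g \<partial>SY"
  have U: "?U = C + M1" unfolding C_def M1_def by (rule marg_fst) measurable
  have W: "?W = C + M2" unfolding C_def M2_def
    using marg_snd[OF F, of k] nu_Pk[OF F, of k] by simp
  have M1le: "M1 \<le> Mk" unfolding M1_def Mk_def by (intro Fk_mono) (auto simp: leq_def F1)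
  have M2le: "M2 \<le> Mk" unfolding M2_def Mk_def by (intro Fk_mono) (auto simp: leq_def F1)
  have Pk1: "(P ^^ k) F g \<le> 1" if "g \<in> space SY" for g
    using Pk_mono[of F "\<lambda>_. 1", OF F1 that] Pk_const[OF that] by simp
  have U1: "?U \<le> 1"
  proof -
    have "?U \<le> (\<integral>\<^sup>+g. u0 g * 1 \<partial>SY)" using Pk1 by (intro nn_integral_mono mult_left_mono) auto
    then show ?thesis using u0_one by simp
  qed
  have W1: "?W \<le> 1"
  proof -
    have "?W \<le> (\<integral>\<^sup>+g. nu g * 1 \<partial>SY)" using F1 by (intro nn_integral_mono mult_left_mono) auto
    then show ?thesis using nu_one by simp
  qed
  have le1: "x < top" if "x \<le> 1" for x :: ennreal
    using that ennreal_one_less_top by (rule order.strict_trans1)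
  have a: "C \<le> ?U" unfolding U by (rule add_increasing2) simp_all
  have b: "M1 \<le> ?U" unfolding U by (rule add_increasing) simp_all
  have c: "M2 \<le> ?W" unfolding W by (rule add_increasing) simp_all
  have fin: "C < top" "M1 < top" "M2 < top"
    using le1[OF order.trans[OF a U1]] le1[OF order.trans[OF b U1]] le1[OF order.trans[OF c W1]] by auto
  have diff: "ennreal \<bar>enn2real ?U - enn2real ?W\<bar> \<le> Mk"
  proof -
    have "\<bar>enn2real ?U - enn2real ?W\<bar> = \<bar>enn2real M1 - enn2real M2\<bar>"
      using fin by (simp add: U W enn2real_plus)
    also have "\<dots> \<le> max (enn2real M1) (enn2real M2)" by (rule abs_diff_le_max) simp_all
    finally have "ennreal \<bar>enn2real ?U - enn2real ?W\<bar> \<le> ennreal (max (enn2real M1) (enn2real M2))"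
      by (rule ennreal_leI)
    also have "\<dots> \<le> Mk"
      using fin M1le M2le by (cases "enn2real M1 \<le> enn2real M2") (simp_all add: max_def ennreal_enn2real less_top)
    finally show ?thesis .
  qed
  let ?e = "min eps 1"
  define K where "K = (1 / th) ^ (j - 1)"
  have th: "0 < th" "th \<le> 1" using cst by auto
  have K0: "0 \<le> K" unfolding K_def using th by simp
  have pw: "1 \<le> ennreal ((1 - ?e) ^ (j - n)) + ennreal K * Theta n (a,b)"
    if ab: "a \<in> space SY" "b \<in> space SY" for n a b
  proof (cases "j \<le> n")
    case True
    then show ?thesis by simp
  next
    case False
    then have nj: "n \<le> j - 1" by simp
    have "1 = K * th ^ (j - 1)" unfolding K_def using th by (simp add: power_one_over)
    also have "\<dots> \<le> K * th ^ n" using th nj K0 by (intro mult_left_mono power_decreasing) simp_all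
    finally have 1: "1 \<le> K * th ^ n" .
    have "1 \<le> ennreal (K * th ^ n)" using 1 by simp
    also have "\<dots> = ennreal K * ennreal (th ^ n) * 1" using K0 th by (simp add: ennreal_mult)
    also have "\<dots> \<le> ennreal K * ennreal (th ^ n) * hh (a,b)" using hh_ge1[OF ab] by (intro mult_left_mono) simp_all
    also have "\<dots> = ennreal K * Theta n (a,b)" by (simp add: Theta_def mult.assoc)
    also have "\<dots> \<le> ennreal ((1 - ?e) ^ (j - n)) + ennreal K * Theta n (a,b)" by simp
    finally show ?thesis .
  qed
  have goodG: "good (\<lambda>n (w::'b\<times>'b). ennreal ((1 - ?e) ^ (j - n)))" unfolding good_def by simp
  have Mk_le: "Mk \<le> ennreal ((1 - ?e) ^ j) + ennreal K * (ennreal al ^ k * (1 + IVu + IVn))"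
  proof -
    have "Mk \<le> Fk k (\<lambda>n w. ennreal ((1 - ?e) ^ (j - n)) + ennreal K * Theta n w)"
      unfolding Mk_def by (intro Fk_mono) (auto simp: leq_def pw)
    also have "\<dots> = Fk k (\<lambda>n w. ennreal ((1 - ?e) ^ (j - n))) + Fk k (\<lambda>n w. ennreal K * Theta n w)"
      by (intro Fk_add goodG good_cmult good_Theta)
    also have "Fk k (\<lambda>n w. ennreal K * Theta n w) = ennreal K * Fk k Theta"
      by (intro Fk_cmult good_Theta)
    also have "Fk k (\<lambda>n w. ennreal ((1 - ?e) ^ (j - n))) + ennreal K * Fk k Theta
        \<le> ennreal ((1 - ?e) ^ j) + ennreal K * (ennreal al ^ k * (1 + IVu + IVn))"
      unfolding IVu_def IVn_def by (intro add_mono mult_left_mono G_bound Theta_bound) simp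
    finally show ?thesis .
  qed
  let ?s = "al powr (1 - r) * AA powr r"
  have s0: "0 \<le> ?s" by simp
  have rr1: "(1 - ?e) ^ j \<le> rho ^ k"
    unfolding rho_def j_def using rate1[OF eps r s0, of k] by simp
  have rr2: "K * al ^ k \<le> rho ^ k"
  proof -
    have "1 / th = AA / al" unfolding th_def by simp
    then have "K * al ^ k \<le> ?s ^ k"
      unfolding K_def j_def using rate2[of al AA r k] cst r by simp
    also have "\<dots> \<le> rho ^ k" unfolding rho_def by (intro power_mono) simp_all
    finally show ?thesis .
  qed
  have c0: "0 \<le> L / (1 - lam)" using L lam by simp
  have IVn: "IVn \<le> ennreal (L / (1 - lam))" unfolding IVn_def by (rule nuV)
  have "Mk \<le> ennreal (rho ^ k) + ennreal (rho ^ k) * (1 + IVu + ennreal (L / (1 - lam)))"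
  proof -
    have "ennreal K * (ennreal al ^ k * (1 + IVu + IVn)) = ennreal (K * al ^ k) * (1 + IVu + IVn)"
      using K0 cst by (simp add: ennreal_mult ennreal_power mult.assoc)
    also have "\<dots> \<le> ennreal (rho ^ k) * (1 + IVu + ennreal (L / (1 - lam)))"
      using rr2 IVn by (intro mult_mono add_mono ennreal_leI) simp_all
    finally show ?thesis using Mk_le rr1 by (auto intro: order.trans add_mono ennreal_leI)
  qed
  also have "\<dots> = ennreal (rho ^ k) * (ennreal (2 + L / (1 - lam)) + IVu)"
  proof -
    have e2: "ennreal (2 + L / (1 - lam)) = 1 + (1 + ennreal (L / (1 - lam)))"
      using ennreal_plus[of 1 "1 + L / (1 - lam)"] ennreal_plus[of 1 "L / (1 - lam)"] c0 by simp
    show ?thesis unfolding e2 by (simp only: distrib_left mult_1_right add_ac)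
  qed
  finally show ?thesis using diff unfolding rho_def IVu_def by (rule order.trans[rotated])
qed
end


locale xc = SX: sigma_finite_measure SX + SY: sigma_finite_measure SY
  for SX :: "'a measure" and SY :: "'b measure" +
  fixes s :: "'a \<Rightarrow> 'b \<Rightarrow> real" and h :: "'b \<Rightarrow> 'a \<Rightarrow> real" and PI :: "'a measure"
  assumes s_meas[measurable]: "(\<lambda>(x, g). s x g) \<in> borel_measurable (SX \<Otimes>\<^sub>M SY)"
    and s_nonneg: "\<forall>x\<in>space SX. \<forall>g\<in>space SY. s x g \<ge> 0"
    and s_pdf: "\<forall>g\<in>space SY. (\<integral>\<^sup>+x. ennreal (s x g) \<partial>SX) = 1"
    and h_meas[measurable]: "(\<lambda>(g, x). h g x) \<in> borel_measurable (SY \<Otimes>\<^sub>M SX)"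
    and h_nonneg: "\<forall>g\<in>space SY. \<forall>x\<in>space SX. h g x \<ge> 0"
    and h_pdf: "\<forall>x\<in>space SX. (\<integral>\<^sup>+g. ennreal (h g x) \<partial>SY) = 1"
    and Kmk: "markov_kernel SX (xkern SX SY s h)"
    and Pi_inv: "invariant_prob SX (xkern SX SY s h) PI"
begin

interpretation SYSX: pair_sigma_finite SY SX ..
interpretation SXSY: pair_sigma_finite SX SY ..

lemma ydens_meas[measurable]: "case_prod (ydens SX s h) \<in> borel_measurable (SY \<Otimes>\<^sub>M SY)"
  unfolding ydens_def by measurable

lemma xdens_meas[measurable]: "case_prod (xdens SY s h) \<in> borel_measurable (SX \<Otimes>\<^sub>M SX)"
  unfolding xdens_def by measurable

lemma h_meas2[measurable]: "x \<in> space SX \<Longrightarrow> (\<lambda>g. h g x) \<in> borel_measurable SY"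
  using measurable_Pair1'[of x SX] h_meas by (auto intro: measurable_compose[where f="\<lambda>g. (g, x)"] simp: measurable_pair_iff)

lemma xdens_meas2[measurable]: "x \<in> space SX \<Longrightarrow> xdens SY s h x \<in> borel_measurable SX"
  using measurable_compose_Pair1[OF _ xdens_meas] by simp

lemma ydens_meas2[measurable]: "g \<in> space SY \<Longrightarrow> ydens SX s h g \<in> borel_measurable SY"
  using measurable_compose_Pair1[OF _ ydens_meas] by simp

lemma ydens_one: assumes g: "g \<in> space SY" shows "(\<integral>\<^sup>+g'. ydens SX s h g g' \<partial>SY) = 1"
proof -
  have "(\<integral>\<^sup>+g'. ydens SX s h g g' \<partial>SY) = (\<integral>\<^sup>+x. \<integral>\<^sup>+g'. ennreal (h g' x * s x g) \<partial>SY \<partial>SX)"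
    unfolding ydens_def by (rule SXSY.Fubini') (use g in measurable)
  also have "\<dots> = (\<integral>\<^sup>+x. ennreal (s x g) * (\<integral>\<^sup>+g'. ennreal (h g' x) \<partial>SY) \<partial>SX)"
  proof (intro nn_integral_cong)
    fix x assume x: "x \<in> space SX"
    have "(\<integral>\<^sup>+g'. ennreal (h g' x * s x g) \<partial>SY) = (\<integral>\<^sup>+g'. ennreal (s x g) * ennreal (h g' x) \<partial>SY)"
      using x g s_nonneg h_nonneg by (intro nn_integral_cong) (simp add: ennreal_mult mult.commute)
    also have "\<dots> = ennreal (s x g) * (\<integral>\<^sup>+g'. ennreal (h g' x) \<partial>SY)"
      by (rule nn_integral_cmult) (use x in measurable)
    finally show "(\<integral>\<^sup>+g'. ennreal (h g' x * s x g) \<partial>SY) = ennreal (s x g) * (\<integral>\<^sup>+g'. ennreal (h g' x) \<partial>SY)" .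
  qed
  also have "\<dots> = (\<integral>\<^sup>+x. ennreal (s x g) \<partial>SX)"
    using h_pdf by (intro nn_integral_cong) simp
  finally show ?thesis using s_pdf g by simp
qed

lemma PI: "prob_space PI" "sets PI = sets SX" "space PI = space SX"
  using Pi_inv sets_eq_imp_space_eq[of PI SX] unfolding invariant_prob_def by auto

interpretation PIp: prob_space PI by (rule PI(1))

lemma K_sub: "xkern SX SY s h \<in> measurable PI (subprob_algebra SX)"
  using Kmk unfolding markov_kernel_def
  by (subst measurable_cong_sets[OF PI(2) refl]) (rule measurable_prob_algebraD)

lemma xkern_sets: "sets (xkern SX SY s h x) = sets SX"
  unfolding xkern_def by simp

lemma PI_bind: "PI = PI \<bind> xkern SX SY s h"
proof (rule measure_eqI)
  have ne: "space PI \<noteq> {}" using PIp.not_empty .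
  show "sets PI = sets (PI \<bind> xkern SX SY s h)"
    using ne by (simp add: PI(2) xkern_sets)
  fix A assume "A \<in> sets PI"
  then have A: "A \<in> sets SX" using PI(2) by simp
  have "emeasure (PI \<bind> xkern SX SY s h) A = (\<integral>\<^sup>+x. emeasure (xkern SX SY s h x) A \<partial>PI)"
    by (rule emeasure_bind[OF ne K_sub A])
  also have "\<dots> = emeasure PI A" using Pi_inv A unfolding invariant_prob_def by simp
  finally show "emeasure PI A = emeasure (PI \<bind> xkern SX SY s h) A" by simp
qed

lemma inv_fun:
  assumes G[measurable]: "G \<in> borel_measurable SX"
  shows "(\<integral>\<^sup>+x. G x \<partial>PI) = (\<integral>\<^sup>+x. \<integral>\<^sup>+x'. xdens SY s h x x' * G x' \<partial>SX \<partial>PI)"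
proof -
  have "(\<integral>\<^sup>+x. G x \<partial>PI) = (\<integral>\<^sup>+x. G x \<partial>(PI \<bind> xkern SX SY s h))"
    using PI_bind by simp
  also have "\<dots> = (\<integral>\<^sup>+x. \<integral>\<^sup>+y. G y \<partial>xkern SX SY s h x \<partial>PI)"
    by (rule nn_integral_bind[OF G K_sub])
  also have "\<dots> = (\<integral>\<^sup>+x. \<integral>\<^sup>+x'. xdens SY s h x x' * G x' \<partial>SX \<partial>PI)"
  proof (intro nn_integral_cong)
    fix x assume "x \<in> space PI"
    then have x: "x \<in> space SX" using PI(3) by simp
    show "(\<integral>\<^sup>+y. G y \<partial>xkern SX SY s h x) = (\<integral>\<^sup>+x'. xdens SY s h x x' * G x' \<partial>SX)"
      unfolding xkern_def by (rule nn_integral_density) (use x in measurable)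
  qed
  finally show ?thesis .
qed

lemma s_meas2[measurable]: "g \<in> space SY \<Longrightarrow> (\<lambda>x. s x g) \<in> borel_measurable SX"
  using measurable_Pair2'[of g SY] s_meas by (auto intro: measurable_compose[where f="\<lambda>x. (x, g)"] simp: measurable_pair_iff)

definition "II x G g g' x' = ennreal (h g x) * G g' * ennreal (h g' x') * ennreal (s x' g)"

lemma KEY:
  assumes x: "x \<in> space SX" and G[measurable]: "G \<in> borel_measurable SY"
  shows "(\<integral>\<^sup>+x'. xdens SY s h x x' * (\<integral>\<^sup>+g'. G g' * ennreal (h g' x') \<partial>SY) \<partial>SX)
       = (\<integral>\<^sup>+g. ennreal (h g x) * (\<integral>\<^sup>+g'. G g' * ydens SX s h g g' \<partial>SY) \<partial>SY)"
proof -
  have [measurable]: "(\<lambda>w. II x G (fst w) (snd w) x') \<in> borel_measurable (SY \<Otimes>\<^sub>M SY)" if "x' \<in> space SX" for x'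
    unfolding II_def using x that by measurable
  have II3[measurable]: "(\<lambda>w. II x G (fst (fst w)) (snd (fst w)) (snd w)) \<in> borel_measurable ((SY \<Otimes>\<^sub>M SY) \<Otimes>\<^sub>M SX)"
    unfolding II_def using x by measurable
  have R1: "ennreal (h g x) * (\<integral>\<^sup>+g'. G g' * ydens SX s h g g' \<partial>SY) = (\<integral>\<^sup>+g'. \<integral>\<^sup>+x'. II x G g g' x' \<partial>SX \<partial>SY)"
    if g: "g \<in> space SY" for g
  proof -
    have "ennreal (h g x) * (\<integral>\<^sup>+g'. G g' * ydens SX s h g g' \<partial>SY) = (\<integral>\<^sup>+g'. ennreal (h g x) * (G g' * ydens SX s h g g') \<partial>SY)"
      by (rule nn_integral_cmult[symmetric]) (use g in measurable)
    also have "\<dots> = (\<integral>\<^sup>+g'. \<integral>\<^sup>+x'. II x G g g' x' \<partial>SX \<partial>SY)"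
    proof (intro nn_integral_cong)
      fix g' assume g': "g' \<in> space SY"
      have "ennreal (h g x) * (G g' * ydens SX s h g g') = (\<integral>\<^sup>+x'. (ennreal (h g x) * G g') * ennreal (h g' x' * s x' g) \<partial>SX)"
        unfolding ydens_def by (subst nn_integral_cmult) (use g g' in \<open>measurable, simp add: mult.assoc\<close>)
      also have "\<dots> = (\<integral>\<^sup>+x'. II x G g g' x' \<partial>SX)"
        unfolding II_def using g g' h_nonneg s_nonneg by (intro nn_integral_cong) (simp add: ennreal_mult mult.assoc)
      finally show "ennreal (h g x) * (G g' * ydens SX s h g g') = (\<integral>\<^sup>+x'. II x G g g' x' \<partial>SX)" .
    qed
    finally show ?thesis .
  qed
  have L1: "xdens SY s h x x' * (\<integral>\<^sup>+g'. G g' * ennreal (h g' x') \<partial>SY) = (\<integral>\<^sup>+g. \<integral>\<^sup>+g'. II x G g g' x' \<partial>SY \<partial>SY)"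
    if x': "x' \<in> space SX" for x'
  proof -
    have "xdens SY s h x x' * (\<integral>\<^sup>+g'. G g' * ennreal (h g' x') \<partial>SY) = (\<integral>\<^sup>+g. ennreal (s x' g * h g x) * (\<integral>\<^sup>+g'. G g' * ennreal (h g' x') \<partial>SY) \<partial>SY)"
      unfolding xdens_def by (rule nn_integral_multc[symmetric]) (use x x' in measurable)
    also have "\<dots> = (\<integral>\<^sup>+g. \<integral>\<^sup>+g'. II x G g g' x' \<partial>SY \<partial>SY)"
    proof (intro nn_integral_cong)
      fix g assume g: "g \<in> space SY"
      have "ennreal (s x' g * h g x) * (\<integral>\<^sup>+g'. G g' * ennreal (h g' x') \<partial>SY) = (\<integral>\<^sup>+g'. ennreal (s x' g * h g x) * (G g' * ennreal (h g' x')) \<partial>SY)"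
        by (rule nn_integral_cmult[symmetric]) (use x' in measurable)
      also have "\<dots> = (\<integral>\<^sup>+g'. II x G g g' x' \<partial>SY)"
        unfolding II_def using g x x' h_nonneg s_nonneg by (intro nn_integral_cong) (simp add: ennreal_mult mult_ac)
      finally show "ennreal (s x' g * h g x) * (\<integral>\<^sup>+g'. G g' * ennreal (h g' x') \<partial>SY) = (\<integral>\<^sup>+g'. II x G g g' x' \<partial>SY)" .
    qed
    finally show ?thesis .
  qed
  have "(\<integral>\<^sup>+g. ennreal (h g x) * (\<integral>\<^sup>+g'. G g' * ydens SX s h g g' \<partial>SY) \<partial>SY)
      = (\<integral>\<^sup>+g. \<integral>\<^sup>+g'. \<integral>\<^sup>+x'. II x G g g' x' \<partial>SX \<partial>SY \<partial>SY)"
    by (intro nn_integral_cong R1)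
  also have "\<dots> = (\<integral>\<^sup>+g. \<integral>\<^sup>+x'. \<integral>\<^sup>+g'. II x G g g' x' \<partial>SY \<partial>SX \<partial>SY)"
  proof (intro nn_integral_cong)
    fix g assume g: "g \<in> space SY"
    show "(\<integral>\<^sup>+g'. \<integral>\<^sup>+x'. II x G g g' x' \<partial>SX \<partial>SY) = (\<integral>\<^sup>+x'. \<integral>\<^sup>+g'. II x G g g' x' \<partial>SY \<partial>SX)"
      by (rule SXSY.Fubini') (unfold II_def, use x g in measurable)
  qed
  also have "\<dots> = (\<integral>\<^sup>+x'. \<integral>\<^sup>+g. \<integral>\<^sup>+g'. II x G g g' x' \<partial>SY \<partial>SY \<partial>SX)"
    by (rule SXSY.Fubini'[where f="\<lambda>x' g. \<integral>\<^sup>+g'. II x G g g' x' \<partial>SY"]) (unfold II_def, use x in measurable)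
  also have "\<dots> = (\<integral>\<^sup>+x'. xdens SY s h x x' * (\<integral>\<^sup>+g'. G g' * ennreal (h g' x') \<partial>SY) \<partial>SX)"
    by (intro nn_integral_cong L1[symmetric])
  finally show ?thesis by simp
qed

lemma h_meas_PI[measurable]: "(\<lambda>(g, x). h g x) \<in> borel_measurable (SY \<Otimes>\<^sub>M PI)"
  using h_meas by (subst measurable_cong_sets[OF sets_pair_measure_cong[OF refl PI(2)] refl])

lemma PI_meas_iff: "f \<in> borel_measurable PI \<longleftrightarrow> f \<in> borel_measurable SX"
  by (subst measurable_cong_sets[OF PI(2) refl]) (rule refl)

interpretation SYPI: pair_sigma_finite SY PI ..

definition "nuf g = (\<integral>\<^sup>+x. ennreal (h g x) \<partial>PI)"

lemma nuf_meas[measurable]: "nuf \<in> borel_measurable SY"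
  unfolding nuf_def[abs_def] by measurable

lemma nuf_one: "(\<integral>\<^sup>+g. nuf g \<partial>SY) = 1"
proof -
  have "(\<integral>\<^sup>+g. nuf g \<partial>SY) = (\<integral>\<^sup>+x. \<integral>\<^sup>+g. ennreal (h g x) \<partial>SY \<partial>PI)"
    unfolding nuf_def by (rule SYPI.Fubini'[symmetric]) measurable
  also have "\<dots> = (\<integral>\<^sup>+x. 1 \<partial>PI)" using h_pdf PI(3) by (intro nn_integral_cong) simp
  finally show ?thesis using PIp.emeasure_space_1 by simp
qed

lemma PF_meas[measurable]: assumes [measurable]: "F \<in> borel_measurable SY" shows "(\<lambda>g. \<integral>\<^sup>+g'. F g' * ydens SX s h g g' \<partial>SY) \<in> borel_measurable SY"
  by measurable

lemma HF_meas[measurable]: assumes [measurable]: "F \<in> borel_measurable SY" shows "(\<lambda>x'. \<integral>\<^sup>+g'. F g' * ennreal (h g' x') \<partial>SY) \<in> borel_measurable SX"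
  by measurable

lemma nuf_stat:
  assumes F[measurable]: "F \<in> borel_measurable SY"
  shows "(\<integral>\<^sup>+g. nuf g * (\<integral>\<^sup>+g'. F g' * ydens SX s h g g' \<partial>SY) \<partial>SY) = (\<integral>\<^sup>+g. nuf g * F g \<partial>SY)"
proof -
  let ?PF = "\<lambda>g. \<integral>\<^sup>+g'. F g' * ydens SX s h g g' \<partial>SY"
  let ?HF = "\<lambda>x'. \<integral>\<^sup>+g'. F g' * ennreal (h g' x') \<partial>SY"
  have "(\<integral>\<^sup>+g. nuf g * ?PF g \<partial>SY) = (\<integral>\<^sup>+g. \<integral>\<^sup>+x. ennreal (h g x) * ?PF g \<partial>PI \<partial>SY)"
    unfolding nuf_def by (intro nn_integral_cong nn_integral_multc[symmetric]) (simp add: PI_meas_iff)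
  also have "\<dots> = (\<integral>\<^sup>+x. \<integral>\<^sup>+g. ennreal (h g x) * ?PF g \<partial>SY \<partial>PI)"
    by (rule SYPI.Fubini'[symmetric]) measurable
  also have "\<dots> = (\<integral>\<^sup>+x. \<integral>\<^sup>+x'. xdens SY s h x x' * ?HF x' \<partial>SX \<partial>PI)"
    using PI(3) by (intro nn_integral_cong KEY[symmetric]) auto
  also have "\<dots> = (\<integral>\<^sup>+x'. ?HF x' \<partial>PI)"
    by (rule inv_fun[symmetric]) measurable
  also have "\<dots> = (\<integral>\<^sup>+g'. \<integral>\<^sup>+x'. F g' * ennreal (h g' x') \<partial>PI \<partial>SY)"
    by (rule SYPI.Fubini') measurable
  also have "\<dots> = (\<integral>\<^sup>+g'. nuf g' * F g' \<partial>SY)"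
    unfolding nuf_def by (intro nn_integral_cong) (simp add: nn_integral_cmult PI_meas_iff mult.commute)
  finally show ?thesis .
qed

definition "SA A g = (\<integral>\<^sup>+x'. indicator A x' * ennreal (s x' g) \<partial>SX)"
definition "PP F g = (\<integral>\<^sup>+g'. F g' * ydens SX s h g g' \<partial>SY)"

lemma SA_meas[measurable]: assumes [measurable]: "A \<in> sets SX" shows "SA A \<in> borel_measurable SY"
  unfolding SA_def[abs_def] by measurable

lemma SA_le1: assumes "g \<in> space SY" shows "SA A g \<le> 1"
proof -
  have "SA A g \<le> (\<integral>\<^sup>+x'. ennreal (s x' g) \<partial>SX)"
    unfolding SA_def by (intro nn_integral_mono) (auto simp: indicator_def)
  then show ?thesis using s_pdf assms by simp
qed

lemma PP_meas[measurable]: assumes [measurable]: "F \<in> borel_measurable SY" shows "PP F \<in> borel_measurable SY"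
  unfolding PP_def by measurable

lemma PPk_meas[measurable]: assumes [measurable]: "F \<in> borel_measurable SY" shows "(PP ^^ k) F \<in> borel_measurable SY"
  by (induction k) auto

lemma PPk_le1: "(\<And>g. g \<in> space SY \<Longrightarrow> F g \<le> 1) \<Longrightarrow> g \<in> space SY \<Longrightarrow> (PP ^^ k) F g \<le> 1"
proof (induction k arbitrary: g)
  case (Suc k)
  have "(PP ^^ Suc k) F g \<le> (\<integral>\<^sup>+g'. 1 * ydens SX s h g g' \<partial>SY)"
    unfolding funpow.simps comp_def PP_def[of "(PP ^^ k) F"]
    using Suc by (intro nn_integral_mono mult_right_mono) auto
  then show ?case using ydens_one[OF Suc.prems(2)] by simp
qed simp

lemma base_id:
  assumes x: "x \<in> space SX" and A[measurable]: "A \<in> sets SX"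
  shows "(\<integral>\<^sup>+x'. xdens SY s h x x' * indicator A x' \<partial>SX) = (\<integral>\<^sup>+g. ennreal (h g x) * SA A g \<partial>SY)"
proof -
  have "(\<integral>\<^sup>+x'. xdens SY s h x x' * indicator A x' \<partial>SX) = (\<integral>\<^sup>+x'. \<integral>\<^sup>+g. ennreal (s x' g * h g x) * indicator A x' \<partial>SY \<partial>SX)"
    unfolding xdens_def by (intro nn_integral_cong nn_integral_multc[symmetric]) (use x in measurable)
  also have "\<dots> = (\<integral>\<^sup>+g. \<integral>\<^sup>+x'. ennreal (s x' g * h g x) * indicator A x' \<partial>SX \<partial>SY)"
    by (rule SXSY.Fubini'[symmetric]) (use x in measurable)
  also have "\<dots> = (\<integral>\<^sup>+g. ennreal (h g x) * SA A g \<partial>SY)"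
  proof (intro nn_integral_cong)
    fix g assume g: "g \<in> space SY"
    have "(\<integral>\<^sup>+x'. ennreal (s x' g * h g x) * indicator A x' \<partial>SX) = (\<integral>\<^sup>+x'. ennreal (h g x) * (indicator A x' * ennreal (s x' g)) \<partial>SX)"
      using g x s_nonneg h_nonneg by (intro nn_integral_cong) (simp add: ennreal_mult mult_ac)
    also have "\<dots> = ennreal (h g x) * SA A g"
      unfolding SA_def by (rule nn_integral_cmult) (use g in measurable)
    finally show "(\<integral>\<^sup>+x'. ennreal (s x' g * h g x) * indicator A x' \<partial>SX) = ennreal (h g x) * SA A g" .
  qed
  finally show ?thesis .
qed

lemma K_prob: "x \<in> space SX \<Longrightarrow> prob_space (xkern SX SY s h x)"
  using measurable_space[OF Kmk[unfolded markov_kernel_def]] by (simp add: space_prob_algebra)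

lemma emeasure_K: "x \<in> space SX \<Longrightarrow> A \<in> sets SX \<Longrightarrow> emeasure (xkern SX SY s h x) A = (\<integral>\<^sup>+x'. xdens SY s h x x' * indicator A x' \<partial>SX)"
  unfolding xkern_def by (rule emeasure_density) measurable

lemma PI_A:
  assumes A[measurable]: "A \<in> sets SX"
  shows "emeasure PI A = (\<integral>\<^sup>+g. nuf g * SA A g \<partial>SY)"
proof -
  have "emeasure PI A = (\<integral>\<^sup>+x. emeasure (xkern SX SY s h x) A \<partial>PI)"
    using Pi_inv A unfolding invariant_prob_def by simp
  also have "\<dots> = (\<integral>\<^sup>+x. \<integral>\<^sup>+g. ennreal (h g x) * SA A g \<partial>SY \<partial>PI)"
    using PI(3) by (intro nn_integral_cong) (simp add: emeasure_K base_id)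
  also have "\<dots> = (\<integral>\<^sup>+g. \<integral>\<^sup>+x. ennreal (h g x) * SA A g \<partial>PI \<partial>SY)"
    by (rule SYPI.Fubini') measurable
  also have "\<dots> = (\<integral>\<^sup>+g. nuf g * SA A g \<partial>SY)"
    unfolding nuf_def by (intro nn_integral_cong nn_integral_multc) (simp add: PI_meas_iff)
  finally show ?thesis .
qed

lemma meas_K: "f \<in> borel_measurable SX \<Longrightarrow> f \<in> borel_measurable (xkern SX SY s h x)"
  by (subst measurable_cong_sets[OF xkern_sets refl])

lemma space_K: "space (xkern SX SY s h x) = space SX"
  unfolding xkern_def by simp

definition "KE A k y = (\<integral>\<^sup>+g. ennreal (h g y) * (PP ^^ k) (SA A) g \<partial>SY)"

lemma KE_meas[measurable]: assumes [measurable]: "A \<in> sets SX" shows "KE A k \<in> borel_measurable SX"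
  unfolding KE_def[abs_def] by measurable

lemma KE_le1: assumes y: "y \<in> space SX" shows "KE A k y \<le> 1"
proof -
  have "KE A k y \<le> (\<integral>\<^sup>+g. ennreal (h g y) * 1 \<partial>SY)"
    unfolding KE_def using SA_le1 by (intro nn_integral_mono mult_left_mono PPk_le1) auto
  then show ?thesis using h_pdf y by simp
qed

lemma kpow_eq:
  assumes x: "x \<in> space SX" and A[measurable]: "A \<in> sets SX"
  shows "kpow (xkern SX SY s h) (Suc k) x A = enn2real (KE A k x)"
  using x
proof (induction k arbitrary: x)
  case 0
  have "kpow (xkern SX SY s h) (Suc 0) x A = (\<integral>y. indicator A y \<partial>xkern SX SY s h x)" by simp
  also have "\<dots> = enn2real (\<integral>\<^sup>+y. ennreal (indicator A y) \<partial>xkern SX SY s h x)"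
    by (rule integral_eq_nn_integral) (auto intro!: meas_K)
  also have "(\<integral>\<^sup>+y. ennreal (indicator A y) \<partial>xkern SX SY s h x) = emeasure (xkern SX SY s h x) A"
  proof -
    have "A \<in> sets (xkern SX SY s h x)" using A by (simp add: xkern_sets)
    then show ?thesis by (simp add: ennreal_indicator)
  qed
  also have "\<dots> = KE A 0 x" unfolding KE_def using 0 by (simp add: emeasure_K base_id)
  finally show ?case .
next
  case (Suc k)
  have "kpow (xkern SX SY s h) (Suc (Suc k)) x A = (\<integral>y. kpow (xkern SX SY s h) (Suc k) y A \<partial>xkern SX SY s h x)" by simp
  also have "\<dots> = (\<integral>y. enn2real (KE A k y) \<partial>xkern SX SY s h x)"
    by (intro Bochner_Integration.integral_cong refl Suc.IH) (simp add: space_K)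
  also have "\<dots> = enn2real (\<integral>\<^sup>+y. ennreal (enn2real (KE A k y)) \<partial>xkern SX SY s h x)"
    by (rule integral_eq_nn_integral) (auto intro!: meas_K)
  also have "(\<integral>\<^sup>+y. ennreal (enn2real (KE A k y)) \<partial>xkern SX SY s h x) = (\<integral>\<^sup>+y. KE A k y \<partial>xkern SX SY s h x)"
  proof (intro nn_integral_cong)
    fix y assume "y \<in> space (xkern SX SY s h x)"
    then have y: "y \<in> space SX" by (simp add: space_K)
    have "KE A k y \<noteq> top" using KE_le1[OF y, of A k] by (auto simp: top_unique)
    then show "ennreal (enn2real (KE A k y)) = KE A k y" by (simp add: ennreal_enn2real less_top)
  qed
  also have "\<dots> = (\<integral>\<^sup>+y. xdens SY s h x y * KE A k y \<partial>SX)"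
    unfolding xkern_def by (rule nn_integral_density) (use Suc.prems in measurable)
  also have "\<dots> = (\<integral>\<^sup>+y. xdens SY s h x y * (\<integral>\<^sup>+g'. (PP ^^ k) (SA A) g' * ennreal (h g' y) \<partial>SY) \<partial>SX)"
    unfolding KE_def by (simp add: mult.commute)
  also have "\<dots> = (\<integral>\<^sup>+g. ennreal (h g x) * (\<integral>\<^sup>+g'. (PP ^^ k) (SA A) g' * ydens SX s h g g' \<partial>SY) \<partial>SY)"
    by (rule KEY[OF Suc.prems]) measurable
  also have "\<dots> = KE A (Suc k) x"
    unfolding KE_def by (simp add: PP_def)
  finally show ?case .
qed

end


theorem corollary1:
  fixes X :: "'a::euclidean_space set" and Y :: "'b::euclidean_space set"
    and s :: "'a \<Rightarrow> 'b \<Rightarrow> real" and h :: "'b \<Rightarrow> 'a \<Rightarrow> real"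
    and V :: "'b \<Rightarrow> real" and lam L \<epsilon> d r :: real
    and Q :: "'b measure" and PI :: "'a measure"
  defines "SX \<equiv> restrict_space lborel X" and "SY \<equiv> restrict_space lborel Y"
  assumes X: "X \<in> sets lborel" and Y: "Y \<in> sets lborel"
    and s_meas: "(\<lambda>(x, g). s x g) \<in> borel_measurable (SX \<Otimes>\<^sub>M SY)"
    and s_nonneg: "\<forall>x\<in>X. \<forall>g\<in>Y. s x g \<ge> 0"
    and s_pdf: "\<forall>g\<in>Y. (\<integral>\<^sup>+x. ennreal (s x g) \<partial>SX) = 1"
    and h_meas: "(\<lambda>(g, x). h g x) \<in> borel_measurable (SY \<Otimes>\<^sub>M SX)"
    and h_nonneg: "\<forall>g\<in>Y. \<forall>x\<in>X. h g x \<ge> 0"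
    and h_pdf: "\<forall>x\<in>X. (\<integral>\<^sup>+g. ennreal (h g x) \<partial>SY) = 1"
    and harrisX: "harris_ergodic SX (xkern SX SY s h)"
    and harrisY: "harris_ergodic SY (ykern SX SY s h)"
    and Pi_inv: "invariant_prob SX (xkern SX SY s h) PI"
    and V_meas: "V \<in> borel_measurable SY"
    and V_nonneg: "\<forall>g\<in>Y. V g \<ge> 0"
    and lam: "0 \<le> lam" "lam < 1"
    and L: "0 \<le> L"
    and drift: "\<forall>g\<in>Y. (\<integral>\<^sup>+g'. ennreal (V g') * ydens SX s h g g' \<partial>SY) \<le> ennreal (lam * V g + L)"
    and eps: "\<epsilon> > 0"
    and Q: "prob_space Q" "sets Q = sets SY"
    and minor: "\<forall>g\<in>Y. V g < d \<longrightarrow>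
                  (\<forall>A\<in>sets SY. ennreal \<epsilon> * emeasure Q A \<le> emeasure (ykern SX SY s h g) A)"
    and d: "d > 2 * L / (1 - lam)"
    and r: "0 < r" "r < 1"
  shows "\<forall>x\<in>X. \<forall>m::nat. m \<ge> 1 \<longrightarrow>
           ennreal (tv_dist SX (kpow (xkern SX SY s h) m x) (measure PI))
             \<le> (ennreal (2 + L / (1 - lam)) + (\<integral>\<^sup>+g. ennreal (V g * h g x) \<partial>SY))
               * ennreal ((max ((1 - \<epsilon>) powr r)
                   (((1 + 2 * L + lam * d) / (1 + d)) powr (1 - r) * (1 + 2 * (lam * d + L)) powr r))
                  ^ (m - 1))"
proof (intro ballI allI impI)
  fix x :: 'a and m :: nat
  assume x: "x \<in> X" and m: "1 \<le> m"
  obtain k where mk: "m = Suc k" using m by (cases m) auto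
  have sfX: "sigma_finite_measure SX" unfolding SX_def by (rule sigma_finite_measure_restrict_space[OF sigma_finite_lborel X])
  have sfY: "sigma_finite_measure SY" unfolding SY_def by (rule sigma_finite_measure_restrict_space[OF sigma_finite_lborel Y])
  have spX: "space SX = X" unfolding SX_def by (simp add: space_restrict_space)
  have spY: "space SY = Y" unfolding SY_def by (simp add: space_restrict_space)
  have Kmk: "markov_kernel SX (xkern SX SY s h)" using harrisX unfolding harris_ergodic_def by simp
  interpret X: xc SX SY s h PI
    using sfX sfY s_meas s_nonneg s_pdf h_meas h_nonneg h_pdf Kmk Pi_inv
    unfolding xc_def xc_axioms_def spX spY by auto
  have xs: "x \<in> space SX" using x spX by simp
  interpret Yc: yc SY "ydens SX s h" V lam L \<epsilon> d Q "\<lambda>g. ennreal (h g x)" X.nuf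
  proof (intro yc.intro[OF sfY] yc_axioms.intro)
    show "case_prod (ydens SX s h) \<in> borel_measurable (SY \<Otimes>\<^sub>M SY)" by (rule X.ydens_meas)
    show "\<And>g. g \<in> space SY \<Longrightarrow> (\<integral>\<^sup>+g'. ydens SX s h g g' \<partial>SY) = 1" by (rule X.ydens_one)
    show "V \<in> borel_measurable SY" by (rule V_meas)
    show "\<And>g. g \<in> space SY \<Longrightarrow> 0 \<le> V g" using V_nonneg spY by auto
    show "0 \<le> lam" "lam < 1" "0 \<le> L" by (fact lam(1), fact lam(2), fact L)
    show "\<And>g. g \<in> space SY \<Longrightarrow> (\<integral>\<^sup>+g'. ennreal (V g') * ydens SX s h g g' \<partial>SY) \<le> ennreal (lam * V g + L)"
      using drift spY by auto
    show "0 < \<epsilon>" by (rule eps)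
    show "prob_space Q" "sets Q = sets SY" by (fact Q(1), fact Q(2))
    show "\<And>g A. g \<in> space SY \<Longrightarrow> V g < d \<Longrightarrow> A \<in> sets SY \<Longrightarrow>
        ennreal \<epsilon> * emeasure Q A \<le> (\<integral>\<^sup>+g'. ydens SX s h g g' * indicator A g' \<partial>SY)"
    proof -
      fix g A assume g: "g \<in> space SY" and V: "V g < d" and A: "A \<in> sets SY"
      have "ennreal \<epsilon> * emeasure Q A \<le> emeasure (ykern SX SY s h g) A"
        using minor g V A spY by auto
      also have "\<dots> = (\<integral>\<^sup>+g'. ydens SX s h g g' * indicator A g' \<partial>SY)"
        unfolding ykern_def using g A by (intro emeasure_density) auto
      finally show "ennreal \<epsilon> * emeasure Q A \<le> (\<integral>\<^sup>+g'. ydens SX s h g g' * indicator A g' \<partial>SY)" .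
    qed
    show "2 * L / (1 - lam) < d" by (rule d)
    show "(\<lambda>g. ennreal (h g x)) \<in> borel_measurable SY" using xs by measurable
    show "(\<integral>\<^sup>+g. ennreal (h g x) \<partial>SY) = 1" using h_pdf x by simp
    show "X.nuf \<in> borel_measurable SY" by (rule X.nuf_meas)
    show "(\<integral>\<^sup>+g. X.nuf g \<partial>SY) = 1" by (rule X.nuf_one)
    show "\<And>F. F \<in> borel_measurable SY \<Longrightarrow>
      (\<integral>\<^sup>+g. X.nuf g * (\<integral>\<^sup>+g'. F g' * ydens SX s h g g' \<partial>SY) \<partial>SY) = (\<integral>\<^sup>+g. X.nuf g * F g \<partial>SY)"
      by (rule X.nuf_stat)
  qed
  have PPeq: "Yc.P = X.PP" by (intro ext) (simp add: Yc.P_def X.PP_def)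
  define rho where "rho = max ((1 - \<epsilon>) powr r)
                   (((1 + 2 * L + lam * d) / (1 + d)) powr (1 - r) * (1 + 2 * (lam * d + L)) powr r)"
  define RHS where "RHS = (ennreal (2 + L / (1 - lam)) + (\<integral>\<^sup>+g. ennreal (V g * h g x) \<partial>SY)) * ennreal (rho ^ (m - 1))"
  have IV: "(\<integral>\<^sup>+g. ennreal (V g) * ennreal (h g x) \<partial>SY) = (\<integral>\<^sup>+g. ennreal (V g * h g x) \<partial>SY)"
    using V_nonneg h_nonneg x spY by (intro nn_integral_cong) (simp add: ennreal_mult)
  have each: "ennreal \<bar>kpow (xkern SX SY s h) m x A - measure PI A\<bar> \<le> RHS" if A: "A \<in> sets SX" for A
  proof -
    have k1: "kpow (xkern SX SY s h) m x A = enn2real (\<integral>\<^sup>+g. ennreal (h g x) * (Yc.P ^^ k) (X.SA A) g \<partial>SY)"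
      unfolding mk PPeq using X.kpow_eq[OF xs A] by (simp add: X.KE_def)
    have k2: "measure PI A = enn2real (\<integral>\<^sup>+g. X.nuf g * X.SA A g \<partial>SY)"
      using X.PI_A[OF A] by (simp add: measure_def)
    have "ennreal \<bar>kpow (xkern SX SY s h) m x A - measure PI A\<bar>
       \<le> ennreal ((max ((1 - \<epsilon>) powr r) (Yc.al powr (1 - r) * Yc.AA powr r)) ^ k) *
        (ennreal (2 + L / (1 - lam)) + (\<integral>\<^sup>+g. ennreal (V g) * ennreal (h g x) \<partial>SY))"
      unfolding k1 k2 using A X.SA_le1 r by (intro Yc.Y_main) auto
    also have "\<dots> = RHS"
      unfolding RHS_def rho_def Yc.al_def Yc.AA_def IV mk by (simp add: mult.commute)
    finally show ?thesis .
  qed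
  show "ennreal (tv_dist SX (kpow (xkern SX SY s h) m x) (measure PI)) \<le> RHS"
    unfolding RHS_def[symmetric] rho_def[symmetric]
  proof (cases "RHS = top")
    case False
    define b where "b = enn2real RHS"
    have b0: "0 \<le> b" unfolding b_def by simp
    have Rb: "RHS = ennreal b" unfolding b_def using False by (simp add: ennreal_enn2real less_top)
    have "\<bar>kpow (xkern SX SY s h) m x A - measure PI A\<bar> \<le> b" if "A \<in> sets SX" for A
      using each[OF that] b0 unfolding Rb by simp
    then have "tv_dist SX (kpow (xkern SX SY s h) m x) (measure PI) \<le> b"
      unfolding tv_dist_def by (intro cSUP_least) auto
    then show ?thesis unfolding Rb by (rule ennreal_leI)
  qed simp
qed


end
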